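(* Define the Poisson bracket $\{H,G\}=\oint\mathsf E h\cdot\mathcal{P}\,\mathsf E g\,\mathrm{d}x$, where $G(k_1,k_2)=\oint g\,\mathrm{d}x$ and $H(k_1,k_2)=\oint h\,\mathrm{d}x$, and $g,h$ are functions of periodic $k_1,k_2$ and their derivatives. Then $\mathrm{d}H[X^g]=\{H,G\}$.
   Context: Closed curves $\gamma:S^1\to\mathbb R^3$ with $\det(\gamma,\gamma',\gamma'')=1$ (centroaffine arclength $x$), invariants $k_1,k_2$ defined by $\gamma'''=(k_1\gamma)'+k_2\gamma$. $D=\partial/\partial x$; $\mathsf E f=\big(\sum_{j\ge0}(-D)^j\partial f/\partial k_1^{(j)},\ \sum_{j\ge0}(-D)^j\partial f/\partial k_2^{(j)}\big)^{\mathrm T}$; $\mathcal{P}=\begin{pmatrix}-2D^3+Dk_1+k_1D & -D^4+D^2k_1+2Dk_2+k_2D\\ D^4-k_1D^2+2k_2D+Dk_2 & \tfrac23(D^5+k_1Dk_1-k_1D^3-D^3k_1)+[k_2,D^2]\end{pmatrix}$. For a local function $g$, $X^g:=(\mathsf E g)_1\gamma'+(\mathsf E g)_2\gamma''+r_0\gamma$, where $r_0$ is determined by the non-stretching condition ($X=a\gamma+b\gamma'+c\gamma''$ is non-stretching iff $b'=-a-\tfrac13(c''+2k_1c)$). *)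

theory Defs
  imports "HOL-Analysis.Analysis"
begin

definition Dv :: "(real \<Rightarrow> 'a::real_normed_vector) \<Rightarrow> real \<Rightarrow> 'a" where
  "Dv f = (\<lambda>x. vector_derivative f (at x))"

definition smooth_fn :: "(real \<Rightarrow> 'a::real_normed_vector) \<Rightarrow> bool" where
  "smooth_fn f \<longleftrightarrow> (\<forall>n x. ((Dv ^^ n) f) differentiable (at x))"

definition periodic_fn :: "real \<Rightarrow> (real \<Rightarrow> 'a) \<Rightarrow> bool" where
  "periodic_fn L f \<longleftrightarrow> (\<forall>x. f (x + L) = f x)"

definition det3 :: "real^3 \<Rightarrow> real^3 \<Rightarrow> real^3 \<Rightarrow> real" where
  "det3 a b c = det (vector [a, b, c] :: real^3^3)"

text \<open>A closed (L-periodic) smooth curve in centroaffine arclength parametrisation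
  det(g,g',g'')=1, with centroaffine invariants k1,k2: g''' = (k1 g)' + k2 g.\<close>
definition ca_curve :: "real \<Rightarrow> (real \<Rightarrow> real^3) \<Rightarrow> (real \<Rightarrow> real) \<Rightarrow> (real \<Rightarrow> real) \<Rightarrow> bool" where
  "ca_curve L \<gamma> k1 k2 \<longleftrightarrow> L > 0 \<and> smooth_fn \<gamma> \<and> periodic_fn L \<gamma> \<and>
     smooth_fn k1 \<and> smooth_fn k2 \<and>
     (\<forall>x. det3 (\<gamma> x) (Dv \<gamma> x) ((Dv ^^ 2) \<gamma> x) = 1) \<and>
     (\<forall>x. (Dv ^^ 3) \<gamma> x = Dv (\<lambda>y. k1 y *\<^sub>R \<gamma> y) x + k2 x *\<^sub>R \<gamma> x)"

text \<open>Local functions: f u v where u j stands for k1^(j), v j for k2^(j).\<close>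
type_synonym jetfn = "(nat \<Rightarrow> real) \<Rightarrow> (nat \<Rightarrow> real) \<Rightarrow> real"

definition pd1 :: "nat \<Rightarrow> jetfn \<Rightarrow> jetfn" where
  "pd1 j f = (\<lambda>u v. deriv (\<lambda>s. f (u(j := s)) v) (u j))"

definition pd2 :: "nat \<Rightarrow> jetfn \<Rightarrow> jetfn" where
  "pd2 j f = (\<lambda>u v. deriv (\<lambda>s. f u (v(j := s))) (v j))"

text \<open>Iterated partial derivatives: (True,j) = d/dk1^(j), (False,j) = d/dk2^(j).\<close>
fun pds :: "(bool \<times> nat) list \<Rightarrow> jetfn \<Rightarrow> jetfn" where
  "pds [] f = f"
| "pds ((b, j) # ws) f = (if b then pd1 j (pds ws f) else pd2 j (pds ws f))"

definition local_fn :: "nat \<Rightarrow> jetfn \<Rightarrow> bool" where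
  "local_fn N f \<longleftrightarrow>
     (\<forall>u u' v v'. (\<forall>j<N. u j = u' j \<and> v j = v' j) \<longrightarrow> f u v = f u' v') \<and>
     (\<forall>ws. (\<forall>j u v. (\<lambda>s. pds ws f (u(j := s)) v) differentiable (at (u j))) \<and>
           (\<forall>j u v. (\<lambda>s. pds ws f u (v(j := s))) differentiable (at (v j))) \<and>
           continuous_on UNIV (\<lambda>p. pds ws f (fst p) (snd p)))"

definition jet :: "(real \<Rightarrow> real) \<Rightarrow> real \<Rightarrow> nat \<Rightarrow> real" where
  "jet k x = (\<lambda>j. (Dv ^^ j) k x)"

text \<open>Variational derivative E f (sum over j<N suffices for local_fn N f).\<close>
definition E1 :: "nat \<Rightarrow> jetfn \<Rightarrow> (real \<Rightarrow> real) \<Rightarrow> (real \<Rightarrow> real) \<Rightarrow> real \<Rightarrow> real" where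
  "E1 N f k1 k2 x = (\<Sum>j<N. (-1) ^ j * (Dv ^^ j) (\<lambda>y. pd1 j f (jet k1 y) (jet k2 y)) x)"

definition E2 :: "nat \<Rightarrow> jetfn \<Rightarrow> (real \<Rightarrow> real) \<Rightarrow> (real \<Rightarrow> real) \<Rightarrow> real \<Rightarrow> real" where
  "E2 N f k1 k2 x = (\<Sum>j<N. (-1) ^ j * (Dv ^^ j) (\<lambda>y. pd2 j f (jet k1 y) (jet k2 y)) x)"

definition Pop1 :: "(real \<Rightarrow> real) \<Rightarrow> (real \<Rightarrow> real) \<Rightarrow> (real \<Rightarrow> real) \<Rightarrow> (real \<Rightarrow> real) \<Rightarrow> real \<Rightarrow> real" where
  "Pop1 k1 k2 a b = (\<lambda>x.
      - 2 * (Dv ^^ 3) a x + Dv (\<lambda>y. k1 y * a y) x + k1 x * Dv a x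
      - (Dv ^^ 4) b x + (Dv ^^ 2) (\<lambda>y. k1 y * b y) x + 2 * Dv (\<lambda>y. k2 y * b y) x + k2 x * Dv b x)"

definition Pop2 :: "(real \<Rightarrow> real) \<Rightarrow> (real \<Rightarrow> real) \<Rightarrow> (real \<Rightarrow> real) \<Rightarrow> (real \<Rightarrow> real) \<Rightarrow> real \<Rightarrow> real" where
  "Pop2 k1 k2 a b = (\<lambda>x.
      (Dv ^^ 4) a x - k1 x * (Dv ^^ 2) a x + 2 * (k2 x * Dv a x) + Dv (\<lambda>y. k2 y * a y) x
      + 2 / 3 * ((Dv ^^ 5) b x + k1 x * Dv (\<lambda>y. k1 y * b y) x - k1 x * (Dv ^^ 3) b x
                 - (Dv ^^ 3) (\<lambda>y. k1 y * b y) x)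
      + (k2 x * (Dv ^^ 2) b x - (Dv ^^ 2) (\<lambda>y. k2 y * b y) x))"

definition pbracket :: "real \<Rightarrow> nat \<Rightarrow> jetfn \<Rightarrow> jetfn \<Rightarrow> (real \<Rightarrow> real) \<Rightarrow> (real \<Rightarrow> real) \<Rightarrow> real" where
  "pbracket L N h g k1 k2 = integral {0..L} (\<lambda>x.
      E1 N h k1 k2 x * Pop1 k1 k2 (E1 N g k1 k2) (E2 N g k1 k2) x
    + E2 N h k1 k2 x * Pop2 k1 k2 (E1 N g k1 k2) (E2 N g k1 k2) x)"

definition functional :: "real \<Rightarrow> jetfn \<Rightarrow> (real \<Rightarrow> real) \<Rightarrow> (real \<Rightarrow> real) \<Rightarrow> real" where
  "functional L f k1 k2 = integral {0..L} (\<lambda>x. f (jet k1 x) (jet k2 x))"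

text \<open>X = a g + b g' + c g'' is non-stretching iff b' = -a - (c'' + 2 k1 c)/3.\<close>
definition nonstretching :: "(real \<Rightarrow> real) \<Rightarrow> (real \<Rightarrow> real) \<Rightarrow> (real \<Rightarrow> real) \<Rightarrow> (real \<Rightarrow> real) \<Rightarrow> bool" where
  "nonstretching k1 a b c \<longleftrightarrow> (\<forall>x. Dv b x = - a x - 1 / 3 * ((Dv ^^ 2) c x + 2 * k1 x * c x))"

definition vfield :: "(real \<Rightarrow> real^3) \<Rightarrow> (real \<Rightarrow> real) \<Rightarrow> (real \<Rightarrow> real) \<Rightarrow> (real \<Rightarrow> real) \<Rightarrow> real \<Rightarrow> real^3" where
  "vfield \<gamma> a b c = (\<lambda>x. a x *\<^sub>R \<gamma> x + b x *\<^sub>R Dv \<gamma> x + c x *\<^sub>R (Dv ^^ 2) \<gamma> x)"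

definition Dt :: "(real \<Rightarrow> real \<Rightarrow> 'a::real_normed_vector) \<Rightarrow> real \<Rightarrow> real \<Rightarrow> 'a" where
  "Dt F = (\<lambda>t x. vector_derivative (\<lambda>s. F s x) (at t))"

definition Dx :: "(real \<Rightarrow> real \<Rightarrow> 'a::real_normed_vector) \<Rightarrow> real \<Rightarrow> real \<Rightarrow> 'a" where
  "Dx F = (\<lambda>t x. vector_derivative (F t) (at x))"

fun pds2 :: "bool list \<Rightarrow> (real \<Rightarrow> real \<Rightarrow> 'a::real_normed_vector) \<Rightarrow> real \<Rightarrow> real \<Rightarrow> 'a" where
  "pds2 [] F = F"
| "pds2 (b # ws) F = (if b then Dt (pds2 ws F) else Dx (pds2 ws F))"

definition smooth2 :: "(real \<Rightarrow> real \<Rightarrow> 'a::real_normed_vector) \<Rightarrow> bool" where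
  "smooth2 F \<longleftrightarrow> (\<forall>ws. (\<forall>t x. (\<lambda>s. pds2 ws F s x) differentiable (at t)) \<and>
                        (\<forall>t x. (pds2 ws F t) differentiable (at x)) \<and>
                        continuous_on UNIV (\<lambda>p. pds2 ws F (fst p) (snd p)))"

end

theory Submission
  imports Defs
begin

lemma Dv_real_deriv: "Dv (f::real\<Rightarrow>real) x = deriv f x"
  by (simp add: Dv_def field_derivative_eq_vector_derivative)

lemma Dv_DERIV: "(f::real\<Rightarrow>real) differentiable at x \<Longrightarrow> (f has_real_derivative Dv f x) (at x)"
  by (simp add: Dv_real_deriv DERIV_deriv_iff_real_differentiable)

lemma Dv_vec: "f differentiable at x \<Longrightarrow> (f has_vector_derivative Dv f x) (at x)"
  by (simp add: Dv_def vector_derivative_works[symmetric])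

lemma Dv_unique: "((f::real\<Rightarrow>real) has_real_derivative d) (at x) \<Longrightarrow> Dv f x = d"
  by (simp add: Dv_real_deriv DERIV_imp_deriv)

lemma Dv_unique_vec: "(f has_vector_derivative d) (at x) \<Longrightarrow> Dv f x = d"
  by (simp add: Dv_def vector_derivative_at)

lemma Dv_Suc: "(Dv ^^ Suc n) f = (Dv ^^ n) (Dv f)"
  by (simp add: funpow_Suc_right del: funpow.simps)

lemma Dv_Suc': "(Dv ^^ Suc n) f = Dv ((Dv ^^ n) f)"
  by simp

definition Cn :: "nat \<Rightarrow> (real \<Rightarrow> 'a::real_normed_vector) \<Rightarrow> bool" where
  "Cn n f \<longleftrightarrow> (\<forall>m\<le>n. \<forall>x. ((Dv ^^ m) f) differentiable (at x))"

lemma Cn_0: "Cn 0 f \<longleftrightarrow> (\<forall>x. f differentiable (at x))"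
  by (simp add: Cn_def)

lemma Cn_Suc: "Cn (Suc n) f \<longleftrightarrow> (\<forall>x. f differentiable (at x)) \<and> Cn n (Dv f)"
  unfolding Cn_def
proof (intro iffI conjI allI impI)
  assume h: "\<forall>m\<le>Suc n. \<forall>x. (Dv ^^ m) f differentiable at x"
  show "f differentiable at x" for x using h[rule_format, of 0] by simp
  show "(Dv ^^ m) (Dv f) differentiable at x" if "m \<le> n" for m x
    using h[rule_format, of "Suc m"] that by (simp only: Dv_Suc)
next
  assume h: "(\<forall>x. f differentiable at x) \<and> (\<forall>m\<le>n. \<forall>x. (Dv ^^ m) (Dv f) differentiable at x)"
  show "(Dv ^^ m) f differentiable at x" if "m \<le> Suc n" for m x
  proof (cases m)
    case 0 then show ?thesis using h by simp
  next
    case (Suc k) then show ?thesis using h that by (simp add: Dv_Suc del: funpow.simps)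
  qed
qed

lemma smooth_Cn: "smooth_fn f \<longleftrightarrow> (\<forall>n. Cn n f)"
  unfolding smooth_fn_def Cn_def by auto

lemma smooth_iff: "smooth_fn f \<longleftrightarrow> (\<forall>x. f differentiable (at x)) \<and> smooth_fn (Dv f)"
  unfolding smooth_Cn
proof safe
  fix x assume "\<forall>n. Cn n f" then show "f differentiable at x" using Cn_0 by blast
next
  fix n assume "\<forall>n. Cn n f" then show "Cn n (Dv f)" using Cn_Suc by blast
next
  fix n assume "\<forall>x. f differentiable at x" "\<forall>n. Cn n (Dv f)"
  then show "Cn n f" by (cases n) (auto simp: Cn_0 Cn_Suc)
qed

lemma smooth_diff[simp]: "smooth_fn f \<Longrightarrow> f differentiable (at x)"
  using smooth_iff by blast

lemma smooth_Dv[simp]: "smooth_fn f \<Longrightarrow> smooth_fn (Dv f)"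
  using smooth_iff by blast

lemma smooth_Dvn[simp]: "smooth_fn f \<Longrightarrow> smooth_fn ((Dv ^^ n) f)"
  by (induction n) auto

lemma Cn_mono: "Cn n f \<Longrightarrow> m \<le> n \<Longrightarrow> Cn m f"
  unfolding Cn_def by auto

lemma Cn_cont: "Cn n f \<Longrightarrow> continuous_on S f"
  unfolding Cn_def
  by (intro continuous_at_imp_continuous_on ballI differentiable_imp_continuous_within) (metis funpow_0 le0)

lemma smooth_cont[simp]: "smooth_fn f \<Longrightarrow> continuous_on S f"
  by (intro continuous_at_imp_continuous_on ballI differentiable_imp_continuous_within smooth_diff)

lemma smooth_isCont[simp]: "smooth_fn f \<Longrightarrow> isCont f x"
  by (simp add: differentiable_imp_continuous_within)

lemma Dv_add: "(\<And>x. f differentiable at x) \<Longrightarrow> (\<And>x. g differentiable at x) \<Longrightarrow>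
   Dv (\<lambda>y. f y + g y) = (\<lambda>y. Dv f y + Dv g y)"
  by (rule ext, rule Dv_unique_vec) (auto intro!: has_vector_derivative_add Dv_vec)

lemma Dv_diff: "(\<And>x. f differentiable at x) \<Longrightarrow> (\<And>x. g differentiable at x) \<Longrightarrow>
   Dv (\<lambda>y. f y - g y) = (\<lambda>y. Dv f y - Dv g y)"
  by (rule ext, rule Dv_unique_vec) (auto intro!: has_vector_derivative_diff Dv_vec)

lemma Dv_minus: "(\<And>x. f differentiable at x) \<Longrightarrow> Dv (\<lambda>y. - f y) = (\<lambda>y. - Dv f y)"
  by (rule ext, rule Dv_unique_vec) (auto intro!: has_vector_derivative_minus Dv_vec)

lemma Dv_const: "Dv (\<lambda>y. c) = (\<lambda>y. 0)"
  by (rule ext, rule Dv_unique_vec) auto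

lemma Dv_mult: "(\<And>x. (f::real\<Rightarrow>real) differentiable at x) \<Longrightarrow> (\<And>x. g differentiable at x) \<Longrightarrow>
   Dv (\<lambda>y. f y * g y) = (\<lambda>y. Dv f y * g y + f y * Dv g y)"
  by (rule ext, rule Dv_unique) (auto intro!: derivative_eq_intros Dv_DERIV)

lemma Dv_scaleR: "(\<And>x. (f::real\<Rightarrow>real) differentiable at x) \<Longrightarrow> (\<And>x. g differentiable at x) \<Longrightarrow>
   Dv (\<lambda>y. f y *\<^sub>R g y) = (\<lambda>y. Dv f y *\<^sub>R g y + f y *\<^sub>R Dv g y)"
  by (rule ext, rule Dv_unique_vec) (auto intro!: has_vector_derivative_scaleR Dv_vec Dv_DERIV
      simp: has_real_derivative_iff_has_vector_derivative[symmetric] algebra_simps)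

lemma Dv_cmult: "(\<And>x. (f::real\<Rightarrow>real) differentiable at x) \<Longrightarrow>
   Dv (\<lambda>y. c * f y) = (\<lambda>y. c * Dv f y)"
  by (rule ext, rule Dv_unique) (auto intro!: derivative_eq_intros Dv_DERIV)

lemma Cn_add: "Cn n f \<Longrightarrow> Cn n g \<Longrightarrow> Cn n (\<lambda>y. f y + g y)"
proof (induction n arbitrary: f g)
  case 0 then show ?case by (auto simp: Cn_0)
next
  case (Suc n)
  then have d: "\<And>x. f differentiable at x" "\<And>x. g differentiable at x" by (auto simp: Cn_Suc)
  show ?case using Suc by (auto simp: Cn_Suc Dv_add[OF d])
qed

lemma Cn_const: "Cn n (\<lambda>y. c)"
  by (induction n arbitrary: c) (auto simp: Cn_0 Cn_Suc Dv_const)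

lemma Cn_minus: "Cn n f \<Longrightarrow> Cn n (\<lambda>y. - f y)"
proof (induction n arbitrary: f)
  case 0 then show ?case by (auto simp: Cn_0)
next
  case (Suc n)
  then have d: "\<And>x. f differentiable at x" by (auto simp: Cn_Suc)
  show ?case using Suc by (auto simp: Cn_Suc Dv_minus[OF d])
qed

lemma Cn_mult: "smooth_fn f \<Longrightarrow> smooth_fn g \<Longrightarrow> Cn n (\<lambda>y. (f y::real) * g y)"
proof (induction n arbitrary: f g)
  case 0 then show ?case by (auto simp: Cn_0)
next
  case (Suc n)
  then have d: "\<And>x. f differentiable at x" "\<And>x. g differentiable at x" by auto
  show ?case using Suc by (auto simp: Cn_Suc Dv_mult[OF d] intro!: Cn_add)
qed

lemma Cn_scaleR: "smooth_fn f \<Longrightarrow> smooth_fn g \<Longrightarrow> Cn n (\<lambda>y. (f y::real) *\<^sub>R g y)"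
proof (induction n arbitrary: f g)
  case 0 then show ?case by (auto simp: Cn_0)
next
  case (Suc n)
  then have d: "\<And>x. f differentiable at x" "\<And>x. g differentiable at x" by auto
  show ?case using Suc by (auto simp: Cn_Suc Dv_scaleR[OF d] intro!: Cn_add)
qed

lemma smooth_add[simp]: "smooth_fn f \<Longrightarrow> smooth_fn g \<Longrightarrow> smooth_fn (\<lambda>y. f y + g y)"
  by (simp add: smooth_Cn Cn_add)
lemma smooth_const[simp]: "smooth_fn (\<lambda>y. c)"
  by (simp add: smooth_Cn Cn_const)
lemma smooth_minus[simp]: "smooth_fn f \<Longrightarrow> smooth_fn (\<lambda>y. - f y)"
  by (simp add: smooth_Cn Cn_minus)
lemma smooth_diff_fn[simp]: "smooth_fn f \<Longrightarrow> smooth_fn g \<Longrightarrow> smooth_fn (\<lambda>y. f y - g y)"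
  using smooth_add[of f "\<lambda>y. - g y"] by simp
lemma smooth_mult[simp]: "smooth_fn f \<Longrightarrow> smooth_fn g \<Longrightarrow> smooth_fn (\<lambda>y. (f y::real) * g y)"
  by (simp add: smooth_Cn Cn_mult)
lemma smooth_scaleR[simp]: "smooth_fn f \<Longrightarrow> smooth_fn g \<Longrightarrow> smooth_fn (\<lambda>y. (f y::real) *\<^sub>R g y)"
  by (simp add: smooth_Cn Cn_scaleR)
lemma smooth_cmult[simp]: "smooth_fn f \<Longrightarrow> smooth_fn (\<lambda>y. c * (f y::real))"
  using smooth_mult[of "\<lambda>y. c" f] by simp
lemma smooth_sum[simp]: "(\<And>i. i \<in> A \<Longrightarrow> smooth_fn (f i)) \<Longrightarrow> smooth_fn (\<lambda>y. \<Sum>i\<in>A. f i y)"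
  by (induction A rule: infinite_finite_induct) auto

lemma tendsto_fun:
  fixes f :: "'a \<Rightarrow> 'i \<Rightarrow> 'b::topological_space"
  assumes "\<And>i. ((\<lambda>t. f t i) \<longlongrightarrow> g i) F"
  shows "(f \<longlongrightarrow> g) F"
proof (rule topological_tendstoI)
  fix S :: "('i \<Rightarrow> 'b) set" assume "open S" "g \<in> S"
  then obtain U where U: "finite {i. U i \<noteq> UNIV}" "\<forall>i. open (U i)" "g \<in> Pi\<^sub>E UNIV U" "Pi\<^sub>E UNIV U \<subseteq> S"
    unfolding open_fun_def openin_product_topology_alt by auto
  have "eventually (\<lambda>t. \<forall>i\<in>{i. U i \<noteq> UNIV}. f t i \<in> U i) F"
    apply (rule eventually_ball_finite[OF U(1)])
    using assms U(2,3) by (auto intro!: topological_tendstoD simp: PiE_iff)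
  then show "eventually (\<lambda>t. f t \<in> S) F"
  proof (rule eventually_mono)
    fix t assume h: "\<forall>i\<in>{i. U i \<noteq> UNIV}. f t i \<in> U i"
    have "\<forall>i. f t i \<in> U i" using h by (metis UNIV_I mem_Collect_eq)
    then have "f t \<in> Pi\<^sub>E UNIV U" by (simp add: PiE_iff)
    then show "f t \<in> S" using U(4) by blast
  qed
qed

lemma continuous_on_upd: "continuous_on UNIV (\<lambda>w::nat\<Rightarrow>real. w(k:=c))"
  apply (intro continuous_on_coordinatewise_then_product)
  subgoal for i by (cases "i = k") (auto simp: fun_upd_def)
  done

lemma CR1:
  fixes \<Psi> :: "(nat \<Rightarrow> real) \<Rightarrow> real" and P :: "nat \<Rightarrow> (nat \<Rightarrow> real) \<Rightarrow> real"
  assumes loc: "\<And>w w'. (\<forall>i<k. w i = w' i) \<Longrightarrow> \<Psi> w = \<Psi> w'"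
   and der: "\<And>i w s. i < k \<Longrightarrow> ((\<lambda>s. \<Psi> (w(i:=s))) has_real_derivative P i (w(i:=s))) (at s)"
   and cont: "\<And>i. i < k \<Longrightarrow> continuous_on UNIV (P i)"
   and W: "\<And>i. ((\<lambda>t. W t i) has_real_derivative W' i) (at t0)"
  shows "((\<lambda>t. \<Psi> (W t)) has_real_derivative (\<Sum>i<k. P i (W t0) * W' i)) (at t0)"
  using loc der cont
proof (induction k arbitrary: \<Psi> P)
  case 0
  have "(\<lambda>t. \<Psi> (W t)) = (\<lambda>t. \<Psi> (W t0))" using "0.prems"(1) by auto
  then show ?case by simp
next
  case (Suc k)
  define c where "c = W t0 k"
  define \<Psi>0 where "\<Psi>0 = (\<lambda>w. \<Psi> (w(k:=c)))"
  define P0 where "P0 = (\<lambda>i w. P i (w(k:=c)))"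
  have IH: "((\<lambda>t. \<Psi>0 (W t)) has_real_derivative (\<Sum>i<k. P0 i (W t0) * W' i)) (at t0)"
  proof (rule Suc.IH)
    show "\<Psi>0 w = \<Psi>0 w'" if "\<forall>i<k. w i = w' i" for w w'
      unfolding \<Psi>0_def by (rule Suc.prems(1)) (use that in \<open>auto simp: less_Suc_eq\<close>)
    show "((\<lambda>s. \<Psi>0 (w(i:=s))) has_real_derivative P0 i (w(i:=s))) (at s)" if "i < k" for i w s
    proof -
      have "i \<noteq> k" using that by simp
      then have e: "\<And>s. (w(i:=s))(k:=c) = (w(k:=c))(i:=s)" by (auto simp: fun_upd_twist)
      show ?thesis unfolding \<Psi>0_def P0_def e using that by (intro Suc.prems(2)) simp
    qed
    show "continuous_on UNIV (P0 i)" if "i < k" for i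
      unfolding P0_def
      by (rule continuous_on_compose2[OF Suc.prems(3)[of i] continuous_on_upd]) (use that in auto)
  qed
  have P0eq: "P0 i (W t0) = P i (W t0)" for i
    unfolding P0_def c_def by simp
  define R where "R = (\<lambda>t. \<Psi> (W t) - \<Psi>0 (W t))"
  have mvt: "\<exists>\<xi>. \<bar>\<xi> - c\<bar> \<le> \<bar>W t k - c\<bar> \<and> R t = P k ((W t)(k:=\<xi>)) * (W t k - c)" for t
  proof -
    define \<phi> where "\<phi> = (\<lambda>s. \<Psi> ((W t)(k:=s)))"
    have d: "DERIV \<phi> s :> P k ((W t)(k:=s))" for s
      unfolding \<phi>_def by (intro Suc.prems(2)) simp
    have R: "R t = \<phi> (W t k) - \<phi> c"
      unfolding R_def \<phi>_def \<Psi>0_def by simp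
    consider "W t k = c" | "c < W t k" | "W t k < c" by linarith
    then show ?thesis
    proof cases
      case 1 then show ?thesis by (intro exI[of _ c]) (simp add: R)
    next
      case 2
      from MVT2[OF 2 d] obtain z where "c < z" "z < W t k" "\<phi> (W t k) - \<phi> c = (W t k - c) * P k ((W t)(k:=z))"
        by blast
      then show ?thesis by (intro exI[of _ z]) (auto simp: R)
    next
      case 3
      from MVT2[OF 3 d] obtain z where "W t k < z" "z < c" "\<phi> c - \<phi> (W t k) = (c - W t k) * P k ((W t)(k:=z))"
        by blast
      then show ?thesis by (intro exI[of _ z]) (auto simp: R algebra_simps)
    qed
  qed
  then obtain \<xi> where \<xi>: "\<And>t. \<bar>\<xi> t - c\<bar> \<le> \<bar>W t k - c\<bar>" "\<And>t. R t = P k ((W t)(k:=\<xi> t)) * (W t k - c)"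
    by metis
  have Wc: "((\<lambda>t. W t i) \<longlongrightarrow> W t0 i) (at t0)" for i
    using DERIV_isCont[OF W[of i]] by (simp add: isCont_def)
  have "((\<lambda>t. \<xi> t - c) \<longlongrightarrow> 0) (at t0)"
  proof (rule Lim_null_comparison)
    show "\<forall>\<^sub>F t in at t0. norm (\<xi> t - c) \<le> \<bar>W t k - c\<bar>" using \<xi>(1) by simp
    have "((\<lambda>t. W t k - c) \<longlongrightarrow> 0) (at t0)"
      using Wc[of k] unfolding c_def by (simp add: LIM_zero)
    then show "((\<lambda>t. \<bar>W t k - c\<bar>) \<longlongrightarrow> 0) (at t0)"
      using tendsto_rabs by fastforce
  qed
  then have \<xi>c: "(\<xi> \<longlongrightarrow> c) (at t0)" by (simp add: LIM_zero_iff)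
  have "((\<lambda>t. (W t)(k:=\<xi> t)) \<longlongrightarrow> W t0) (at t0)"
  proof (rule tendsto_fun)
    fix i show "((\<lambda>t. ((W t)(k:=\<xi> t)) i) \<longlongrightarrow> W t0 i) (at t0)"
      using \<xi>c Wc[of i] unfolding c_def by (cases "i = k") auto
  qed
  moreover have "isCont (P k) (W t0)"
    using Suc.prems(3)[of k] by (simp add: continuous_on_eq_continuous_at)
  ultimately have lP: "((\<lambda>t. P k ((W t)(k:=\<xi> t))) \<longlongrightarrow> P k (W t0)) (at t0)"
    using isCont_tendsto_compose by blast
  have lq: "((\<lambda>t. (W t k - W t0 k) / (t - t0)) \<longlongrightarrow> W' k) (at t0)"
    using W[of k] by (simp add: has_field_derivative_iff)
  have R0: "R t0 = 0" unfolding R_def \<Psi>0_def c_def by simp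
  have "(R has_real_derivative P k (W t0) * W' k) (at t0)"
    unfolding has_field_derivative_iff
  proof -
    have eq: "(\<lambda>t. (R t - R t0) / (t - t0)) = (\<lambda>t. P k ((W t)(k:=\<xi> t)) * ((W t k - W t0 k) / (t - t0)))"
      by (rule ext) (simp add: \<xi>(2) R0 c_def)
    show "((\<lambda>t. (R t - R t0) / (t - t0)) \<longlongrightarrow> P k (W t0) * W' k) (at t0)"
      unfolding eq by (rule tendsto_mult[OF lP lq])
  qed
  from DERIV_add[OF IH this]
  have "((\<lambda>t. \<Psi>0 (W t) + R t) has_real_derivative (\<Sum>i<k. P0 i (W t0) * W' i) + P k (W t0) * W' k) (at t0)" .
  then show ?case unfolding R_def P0eq by simp
qed

lemma pd1_DERIV:
  assumes "\<forall>j u v. (\<lambda>s. F (u(j := s)) v) differentiable (at (u j))"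
  shows "((\<lambda>s. F (u(j := s)) v) has_real_derivative pd1 j F (u(j:=s)) v) (at s)"
proof -
  have "(\<lambda>s'. F ((u(j:=s))(j := s')) v) differentiable (at ((u(j:=s)) j))" using assms by blast
  then show ?thesis unfolding pd1_def by (simp add: DERIV_deriv_iff_real_differentiable)
qed

lemma pd2_DERIV:
  assumes "\<forall>j u v. (\<lambda>s. F u (v(j := s))) differentiable (at (v j))"
  shows "((\<lambda>s. F u (v(j := s))) has_real_derivative pd2 j F u (v(j:=s))) (at s)"
proof -
  have "(\<lambda>s'. F u ((v(j:=s))(j := s'))) differentiable (at ((v(j:=s)) j))" using assms by blast
  then show ?thesis unfolding pd2_def by (simp add: DERIV_deriv_iff_real_differentiable)
qed

lemma sum_even_odd: "(\<Sum>i<2*N. g i) = (\<Sum>j<N. g (2*j) + g (2*j+1::nat))"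
  by (induction N) (auto simp: sum.distrib ac_simps)

lemma pd1_local:
  assumes loc: "\<And>u u' v v'. (\<forall>j<N. u j = u' j \<and> v j = v' j) \<Longrightarrow> F u v = F u' v'"
    and "\<forall>i<N. u i = u' i \<and> v i = v' i"
  shows "pd1 j F u v = pd1 j F u' v'"
proof -
  have e: "(\<lambda>s. F (u(j:=s)) v) = (\<lambda>s. F (u'(j:=s)) v')"
    by (rule ext, rule loc) (use assms(2) in auto)
  show ?thesis
  proof (cases "j < N")
    case True then show ?thesis unfolding pd1_def e using assms(2) by simp
  next
    case False
    have "(\<lambda>s. F (u'(j:=s)) v') = (\<lambda>s. F u' v')" by (rule ext, rule loc) (use False in auto)
    then show ?thesis unfolding pd1_def e by simp
  qed
qed

lemma pd2_local:
  assumes loc: "\<And>u u' v v'. (\<forall>j<N. u j = u' j \<and> v j = v' j) \<Longrightarrow> F u v = F u' v'"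
    and "\<forall>i<N. u i = u' i \<and> v i = v' i"
  shows "pd2 j F u v = pd2 j F u' v'"
proof -
  have e: "(\<lambda>s. F u (v(j:=s))) = (\<lambda>s. F u' (v'(j:=s)))"
    by (rule ext, rule loc) (use assms(2) in auto)
  show ?thesis
  proof (cases "j < N")
    case True then show ?thesis unfolding pd2_def e using assms(2) by simp
  next
    case False
    have "(\<lambda>s. F u' (v'(j:=s))) = (\<lambda>s. F u' v')" by (rule ext, rule loc) (use False in auto)
    then show ?thesis unfolding pd2_def e by simp
  qed
qed

lemma CR:
  fixes F :: jetfn
  assumes F: "local_fn N F"
   and U: "\<And>j. j < N \<Longrightarrow> ((\<lambda>t. U t j) has_real_derivative U' j) (at t0)"
   and V: "\<And>j. j < N \<Longrightarrow> ((\<lambda>t. V t j) has_real_derivative V' j) (at t0)"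
  shows "((\<lambda>t. F (U t) (V t)) has_real_derivative
     (\<Sum>j<N. pd1 j F (U t0) (V t0) * U' j + pd2 j F (U t0) (V t0) * V' j)) (at t0)"
proof -
  define d1 where "d1 = (\<lambda>w::nat\<Rightarrow>real. \<lambda>j. w (2*j))"
  define d2 where "d2 = (\<lambda>w::nat\<Rightarrow>real. \<lambda>j. w (2*j+1))"
  define \<Psi> where "\<Psi> = (\<lambda>w. F (d1 w) (d2 w))"
  define P where "P = (\<lambda>i w. if even i then pd1 (i div 2) F (d1 w) (d2 w) else pd2 (i div 2) F (d1 w) (d2 w))"
  define W where "W = (\<lambda>t i. if i < 2*N then (if even i then U t (i div 2) else V t (i div 2)) else 0)"
  define W' where "W' = (\<lambda>i. if i < 2*N then (if even i then U' (i div 2) else V' (i div 2)) else 0)"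
  have loc: "\<And>u u' v v'. (\<forall>j<N. u j = u' j \<and> v j = v' j) \<Longrightarrow> F u v = F u' v'"
    using F unfolding local_fn_def by blast
  have dif1: "\<forall>j u v. (\<lambda>s. F (u(j := s)) v) differentiable (at (u j))"
   and dif2: "\<forall>j u v. (\<lambda>s. F u (v(j := s))) differentiable (at (v j))"
  proof -
    have "(\<forall>j u v. (\<lambda>s. pds [] F (u(j := s)) v) differentiable (at (u j))) \<and>
          (\<forall>j u v. (\<lambda>s. pds [] F u (v(j := s))) differentiable (at (v j)))"
      using F unfolding local_fn_def by blast
    then show "\<forall>j u v. (\<lambda>s. F (u(j := s)) v) differentiable (at (u j))"
          "\<forall>j u v. (\<lambda>s. F u (v(j := s))) differentiable (at (v j))" by simp_all
  qed
  have c1: "continuous_on UNIV (\<lambda>p. pd1 j F (fst p) (snd p))" for j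
  proof -
    have "continuous_on UNIV (\<lambda>p. pds [(True,j)] F (fst p) (snd p))" using F unfolding local_fn_def by blast
    then show ?thesis by simp
  qed
  have c2: "continuous_on UNIV (\<lambda>p. pd2 j F (fst p) (snd p))" for j
  proof -
    have "continuous_on UNIV (\<lambda>p. pds [(False,j)] F (fst p) (snd p))" using F unfolding local_fn_def by blast
    then show ?thesis by simp
  qed
  have cd: "continuous_on UNIV (\<lambda>w. (d1 w, d2 w))"
    unfolding d1_def d2_def by (intro continuous_on_Pair continuous_on_coordinatewise_then_product) auto
  have "((\<lambda>t. \<Psi> (W t)) has_real_derivative (\<Sum>i<2*N. P i (W t0) * W' i)) (at t0)"
  proof (rule CR1)
    show "\<Psi> w = \<Psi> w'" if "\<forall>i<2 * N. w i = w' i" for w w'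
      unfolding \<Psi>_def d1_def d2_def by (rule loc) (use that in auto)
    show "((\<lambda>s. \<Psi> (w(i := s))) has_real_derivative P i (w(i := s))) (at s)" if "i < 2*N" for i w s
    proof (cases "even i")
      case True
      then obtain j where j: "i = 2*j" by blast
      have e1: "d1 (w(i:=s')) = (d1 w)(j := s')" for s' unfolding d1_def j by (auto simp: fun_eq_iff)
      have e2: "d2 (w(i:=s')) = d2 w" for s'
      proof (rule ext)
        fix x have "2*x+1 \<noteq> 2*j" by presburger
        then show "d2 (w(i:=s')) x = d2 w x" unfolding d2_def j by simp
      qed
      have "P i = (\<lambda>w. pd1 j F (d1 w) (d2 w))" using True j by (simp add: P_def)
      then show ?thesis unfolding \<Psi>_def e1 e2 by (simp only: e1 e2) (rule pd1_DERIV[OF dif1])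
    next
      case False
      then obtain j where j: "i = 2*j+1" using oddE by blast
      have e1: "d1 (w(i:=s')) = d1 w" for s'
      proof (rule ext)
        fix x have "2*x \<noteq> 2*j+1" by presburger
        then show "d1 (w(i:=s')) x = d1 w x" unfolding d1_def j by simp
      qed
      have e2: "d2 (w(i:=s')) = (d2 w)(j:=s')" for s' unfolding d2_def j by (auto simp: fun_eq_iff)
      have "P i = (\<lambda>w. pd2 j F (d1 w) (d2 w))" using False j by (simp add: P_def)
      then show ?thesis unfolding \<Psi>_def e1 e2 by (simp only: e1 e2) (rule pd2_DERIV[OF dif2])
    qed
    show "continuous_on UNIV (P i)" if "i < 2*N" for i
    proof (cases "even i")
      case True
      have "continuous_on UNIV (\<lambda>w. pd1 (i div 2) F (fst (d1 w, d2 w)) (snd (d1 w, d2 w)))"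
        by (rule continuous_on_compose2[OF c1 cd]) auto
      then show ?thesis unfolding P_def using True by simp
    next
      case False
      have "continuous_on UNIV (\<lambda>w. pd2 (i div 2) F (fst (d1 w, d2 w)) (snd (d1 w, d2 w)))"
        by (rule continuous_on_compose2[OF c2 cd]) auto
      then show ?thesis unfolding P_def using False by simp
    qed
    show "((\<lambda>t. W t i) has_real_derivative W' i) (at t0)" for i
      unfolding W_def W'_def using U[of "i div 2"] V[of "i div 2"] by auto
  qed
  moreover have "\<Psi> (W t) = F (U t) (V t)" for t
    unfolding \<Psi>_def W_def d1_def d2_def by (rule loc) auto
  moreover have "(\<Sum>i<2*N. P i (W t0) * W' i) =
     (\<Sum>j<N. pd1 j F (U t0) (V t0) * U' j + pd2 j F (U t0) (V t0) * V' j)"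
    unfolding sum_even_odd
  proof (rule sum.cong[OF refl])
    fix j assume j: "j \<in> {..<N}"
    have a: "pd1 j F (d1 (W t0)) (d2 (W t0)) = pd1 j F (U t0) (V t0)"
      by (rule pd1_local[OF loc]) (auto simp: d1_def d2_def W_def)
    have b: "pd2 j F (d1 (W t0)) (d2 (W t0)) = pd2 j F (U t0) (V t0)"
      by (rule pd2_local[OF loc]) (auto simp: d1_def d2_def W_def)
    show "P (2 * j) (W t0) * W' (2 * j) + P (2 * j + 1) (W t0) * W' (2 * j + 1) =
          pd1 j F (U t0) (V t0) * U' j + pd2 j F (U t0) (V t0) * V' j"
      using j a b unfolding P_def W'_def by simp
  qed
  ultimately show ?thesis by simp
qed

lemma Cn_mult2: "Cn n f \<Longrightarrow> Cn n g \<Longrightarrow> Cn n (\<lambda>y. (f y::real) * g y)"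
proof (induction n arbitrary: f g)
  case 0 then show ?case by (auto simp: Cn_0)
next
  case (Suc n)
  then have d: "\<And>x. f differentiable at x" "\<And>x. g differentiable at x" by (auto simp: Cn_Suc)
  have "Cn n f" "Cn n g" using Suc.prems Cn_mono le_SucI by blast+
  then show ?case using Suc by (auto simp: Cn_Suc Dv_mult[OF d] intro!: Cn_add)
qed

lemma Cn_sum: "(\<And>i. i \<in> A \<Longrightarrow> Cn n (f i)) \<Longrightarrow> Cn n (\<lambda>y. \<Sum>i\<in>A. f i y)"
  by (induction A rule: infinite_finite_induct) (auto intro!: Cn_add simp: Cn_const)

lemma pds_append: "pds ws' (pds ws F) = pds (ws' @ ws) F"
proof (induction ws')
  case (Cons a ws') then show ?case by (cases a) auto
qed simp

lemma local_pds:
  assumes loc: "\<And>u u' v v'. (\<forall>j<N. u j = u' j \<and> v j = v' j) \<Longrightarrow> F u v = F u' v'"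
  shows "(\<forall>j<N. u j = u' j \<and> v j = v' j) \<Longrightarrow> pds ws F u v = pds ws F u' v'"
proof (induction ws arbitrary: u u' v v')
  case Nil then show ?case using loc by simp
next
  case (Cons w ws)
  obtain b j where w: "w = (b, j)" by (cases w)
  have l: "\<And>u u' v v'. (\<forall>j<N. u j = u' j \<and> v j = v' j) \<Longrightarrow> pds ws F u v = pds ws F u' v'"
    using Cons.IH by blast
  show ?case using pd1_local[OF l Cons.prems] pd2_local[OF l Cons.prems] w by simp
qed

lemma local_fn_pds: "local_fn N F \<Longrightarrow> local_fn N (pds ws F)"
  unfolding local_fn_def pds_append
  by (intro conjI allI impI; (rule local_pds)?) blast+

lemma local_fn_pd1: "local_fn N F \<Longrightarrow> local_fn N (pd1 j F)"
  using local_fn_pds[of N F "[(True,j)]"] by simp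
lemma local_fn_pd2: "local_fn N F \<Longrightarrow> local_fn N (pd2 j F)"
  using local_fn_pds[of N F "[(False,j)]"] by simp

lemma jet_DERIV: "smooth_fn k \<Longrightarrow> ((\<lambda>y. jet k y j) has_real_derivative jet k y (Suc j)) (at y)"
  unfolding jet_def Dv_Suc' by (rule Dv_DERIV) simp

lemma comp_DERIV:
  assumes "local_fn N F" "smooth_fn k1" "smooth_fn k2"
  shows "((\<lambda>y. F (jet k1 y) (jet k2 y)) has_real_derivative
     (\<Sum>j<N. pd1 j F (jet k1 y) (jet k2 y) * jet k1 y (Suc j) + pd2 j F (jet k1 y) (jet k2 y) * jet k2 y (Suc j))) (at y)"
  by (rule CR[OF assms(1)]) (auto intro!: jet_DERIV assms)

lemma Dv_comp:
  assumes "local_fn N F" "smooth_fn k1" "smooth_fn k2"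
  shows "Dv (\<lambda>y. F (jet k1 y) (jet k2 y)) =
     (\<lambda>y. \<Sum>j<N. pd1 j F (jet k1 y) (jet k2 y) * jet k1 y (Suc j) + pd2 j F (jet k1 y) (jet k2 y) * jet k2 y (Suc j))"
  by (rule ext, rule Dv_unique, rule comp_DERIV[OF assms])

lemma smooth_jet[simp]: "smooth_fn k \<Longrightarrow> smooth_fn (\<lambda>y. jet k y j)"
  unfolding jet_def by simp

lemma Cn_smooth: "smooth_fn f \<Longrightarrow> Cn n f"
  by (simp add: smooth_Cn)

lemma comp_smooth:
  assumes "local_fn N F" "smooth_fn k1" "smooth_fn k2"
  shows "smooth_fn (\<lambda>y. F (jet k1 y) (jet k2 y))"
proof -
  have "\<forall>F. local_fn N F \<longrightarrow> Cn n (\<lambda>y. F (jet k1 y) (jet k2 y))" for n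
  proof (induction n)
    case 0 then show ?case
      using comp_DERIV[OF _ assms(2,3)] by (auto simp: Cn_0 real_differentiable_def)
  next
    case (Suc n)
    show ?case
    proof (intro allI impI)
      fix F assume F: "local_fn N F"
      have j1: "Cn n (\<lambda>y. jet k1 y (Suc j))" "Cn n (\<lambda>y. jet k2 y (Suc j))" for j
        using assms(2,3) by (auto intro!: Cn_smooth)
      show "Cn (Suc n) (\<lambda>y. F (jet k1 y) (jet k2 y))"
        unfolding Cn_Suc Dv_comp[OF F assms(2,3)]
        apply (intro conjI allI)
        using comp_DERIV[OF F assms(2,3)] apply (auto simp: real_differentiable_def)[1]
        apply (intro Cn_sum Cn_add Cn_mult2)
        using Suc.IH local_fn_pd1[OF F] local_fn_pd2[OF F] j1 by auto
    qed
  qed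
  then show ?thesis using assms(1) by (simp add: smooth_Cn)
qed

lemma E1_smooth: "local_fn N g \<Longrightarrow> smooth_fn k1 \<Longrightarrow> smooth_fn k2 \<Longrightarrow> smooth_fn (E1 N g k1 k2)"
proof -
  assume a: "local_fn N g" "smooth_fn k1" "smooth_fn k2"
  have "E1 N g k1 k2 = (\<lambda>x. \<Sum>j<N. (-1) ^ j * (Dv ^^ j) (\<lambda>y. pd1 j g (jet k1 y) (jet k2 y)) x)"
    by (simp add: fun_eq_iff E1_def)
  then show ?thesis using comp_smooth[OF local_fn_pd1[OF a(1)] a(2,3)] by simp
qed

lemma E2_smooth: "local_fn N g \<Longrightarrow> smooth_fn k1 \<Longrightarrow> smooth_fn k2 \<Longrightarrow> smooth_fn (E2 N g k1 k2)"
proof -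
  assume a: "local_fn N g" "smooth_fn k1" "smooth_fn k2"
  have "E2 N g k1 k2 = (\<lambda>x. \<Sum>j<N. (-1) ^ j * (Dv ^^ j) (\<lambda>y. pd2 j g (jet k1 y) (jet k2 y)) x)"
    by (simp add: fun_eq_iff E2_def)
  then show ?thesis using comp_smooth[OF local_fn_pd2[OF a(1)] a(2,3)] by simp
qed

lemma periodic_Dv:
  assumes p: "periodic_fn L (f::real\<Rightarrow>real)" and d: "\<And>x. f differentiable at x"
  shows "periodic_fn L (Dv f)"
  unfolding periodic_fn_def
proof
  fix x
  have "((\<lambda>y. f (y + L)) has_real_derivative Dv f (x + L)) (at x)"
    using Dv_DERIV[OF d, of "x + L"] by (simp add: DERIV_shift)
  moreover have "(\<lambda>y. f (y + L)) = f" using p by (simp add: periodic_fn_def)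
  ultimately show "Dv f (x + L) = Dv f x" using Dv_unique by metis
qed

lemma periodic_Dvn: "periodic_fn L f \<Longrightarrow> smooth_fn f \<Longrightarrow> periodic_fn L ((Dv ^^ n) (f::real\<Rightarrow>real))"
  by (induction n) (auto intro!: periodic_Dv)

lemma periodic_jet: "periodic_fn L k \<Longrightarrow> smooth_fn k \<Longrightarrow> jet k (x + L) = jet k x"
  using periodic_Dvn unfolding jet_def periodic_fn_def by fastforce

lemma periodic_comp: "periodic_fn L k1 \<Longrightarrow> smooth_fn k1 \<Longrightarrow> periodic_fn L k2 \<Longrightarrow> smooth_fn k2 \<Longrightarrow>
   periodic_fn L (\<lambda>y. F (jet k1 y) (jet k2 y))"
  using periodic_jet[of L k1] periodic_jet[of L k2] unfolding periodic_fn_def by simp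

lemma periodic_mult: "periodic_fn L f \<Longrightarrow> periodic_fn L g \<Longrightarrow> periodic_fn L (\<lambda>y. (f y::real) * g y)"
  unfolding periodic_fn_def by simp

lemma periodic_sum: "(\<And>i. i \<in> A \<Longrightarrow> periodic_fn L (f i)) \<Longrightarrow> periodic_fn L (\<lambda>y. \<Sum>i\<in>A. (f i y::real))"
  unfolding periodic_fn_def by simp

lemma smooth_integrable: "smooth_fn f \<Longrightarrow> (f::real\<Rightarrow>real) integrable_on {a..b}"
  by (rule integrable_continuous_interval) simp

lemma IBP1:
  assumes L: "L \<ge> 0" and f: "smooth_fn f" "periodic_fn L f" and g: "smooth_fn g" "periodic_fn L g"
  shows "integral {0..L} (\<lambda>x. f x * Dv g x) = - integral {0..L} (\<lambda>x. Dv f x * (g::real\<Rightarrow>real) x)"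
proof -
  have "((\<lambda>x. Dv f x * g x + f x * Dv g x) has_integral (f L * g L - f 0 * g 0)) {0..L}"
  proof (rule fundamental_theorem_of_calculus[OF L])
    fix x :: real
    have "((\<lambda>x. f x * g x) has_real_derivative Dv f x * g x + Dv g x * f x) (at x)"
      by (rule DERIV_mult; rule Dv_DERIV) (simp_all add: f g)
    then have "((\<lambda>x. f x * g x) has_real_derivative Dv f x * g x + f x * Dv g x) (at x within {0..L})"
      by (simp add: has_field_derivative_at_within algebra_simps)
    then show "((\<lambda>x. f x * g x) has_vector_derivative Dv f x * g x + f x * Dv g x) (at x within {0..L})"
      by (simp add: has_real_derivative_iff_has_vector_derivative)
  qed
  moreover have "f L * g L - f 0 * g 0 = 0"
  proof -
    have "f (0 + L) = f 0" "g (0 + L) = g 0" using f(2) g(2) unfolding periodic_fn_def by blast+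
    then show ?thesis by simp
  qed
  ultimately have "integral {0..L} (\<lambda>x. Dv f x * g x + f x * Dv g x) = 0"
    by (simp add: integral_unique)
  moreover have "integral {0..L} (\<lambda>x. Dv f x * g x + f x * Dv g x) =
     integral {0..L} (\<lambda>x. Dv f x * g x) + integral {0..L} (\<lambda>x. f x * Dv g x)"
    by (rule integral_add) (auto intro!: smooth_integrable simp: f g)
  ultimately show ?thesis by linarith
qed

lemma IBP:
  assumes L: "L \<ge> 0" and f: "smooth_fn f" "periodic_fn L f" and g: "smooth_fn g" "periodic_fn L g"
  shows "integral {0..L} (\<lambda>x. f x * (Dv ^^ j) g x) = (-1)^j * integral {0..L} (\<lambda>x. (Dv ^^ j) f x * (g::real\<Rightarrow>real) x)"
  using f
proof (induction j arbitrary: f)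
  case 0 then show ?case by simp
next
  case (Suc j)
  have "integral {0..L} (\<lambda>x. f x * (Dv ^^ Suc j) g x) = integral {0..L} (\<lambda>x. f x * Dv ((Dv ^^ j) g) x)"
    by simp
  also have "\<dots> = - integral {0..L} (\<lambda>x. Dv f x * (Dv ^^ j) g x)"
    by (rule IBP1[OF L Suc.prems]) (auto intro!: periodic_Dvn g simp: g(1))
  also have "\<dots> = - ((-1)^j * integral {0..L} (\<lambda>x. (Dv ^^ j) (Dv f) x * g x))"
  proof -
    have "periodic_fn L (Dv f)" by (rule periodic_Dv) (use Suc.prems in auto)
    then have "integral {0..L} (\<lambda>x. Dv f x * (Dv ^^ j) g x) = (-1)^j * integral {0..L} (\<lambda>x. (Dv ^^ j) (Dv f) x * g x)"
      using Suc.prems by (intro Suc.IH) simp_all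
    then show ?thesis by (simp only:)
  qed
  also have "\<dots> = (-1)^Suc j * integral {0..L} (\<lambda>x. (Dv ^^ Suc j) f x * g x)"
    by (simp only: Dv_Suc power_Suc mult_minus_left mult_1_left)
  finally show ?case .
qed

lemma dH_formula:
  assumes L: "L \<ge> 0" and h: "local_fn N h"
    and k: "smooth_fn k1" "periodic_fn L k1" "smooth_fn k2" "periodic_fn L k2"
    and d: "smooth_fn d1" "periodic_fn L d1" "smooth_fn d2" "periodic_fn L d2"
  shows "integral {0..L} (\<lambda>x. \<Sum>j<N. pd1 j h (jet k1 x) (jet k2 x) * (Dv ^^ j) d1 x + pd2 j h (jet k1 x) (jet k2 x) * (Dv ^^ j) d2 x)
       = integral {0..L} (\<lambda>x. E1 N h k1 k2 x * d1 x + E2 N h k1 k2 x * d2 x)"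
proof -
  define c1 where "c1 = (\<lambda>j y. pd1 j h (jet k1 y) (jet k2 y))"
  define c2 where "c2 = (\<lambda>j y. pd2 j h (jet k1 y) (jet k2 y))"
  have sc: "smooth_fn (c1 j)" "smooth_fn (c2 j)" for j
    unfolding c1_def c2_def using comp_smooth local_fn_pd1 local_fn_pd2 h k by blast+
  have pc: "periodic_fn L (c1 j)" "periodic_fn L (c2 j)" for j
    unfolding c1_def c2_def using periodic_comp k by blast+
  have i1: "integral {0..L} (\<lambda>x. c1 j x * (Dv ^^ j) d1 x) = integral {0..L} (\<lambda>x. (-1)^j * (Dv ^^ j) (c1 j) x * d1 x)" for j
    using IBP[OF L sc(1) pc(1) d(1,2), of j] by (simp add: mult.assoc)
  have i2: "integral {0..L} (\<lambda>x. c2 j x * (Dv ^^ j) d2 x) = integral {0..L} (\<lambda>x. (-1)^j * (Dv ^^ j) (c2 j) x * d2 x)" for j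
    using IBP[OF L sc(2) pc(2) d(3,4), of j] by (simp add: mult.assoc)
  have "integral {0..L} (\<lambda>x. \<Sum>j<N. c1 j x * (Dv ^^ j) d1 x + c2 j x * (Dv ^^ j) d2 x)
      = (\<Sum>j<N. integral {0..L} (\<lambda>x. c1 j x * (Dv ^^ j) d1 x + c2 j x * (Dv ^^ j) d2 x))"
    by (rule integral_sum) (auto intro!: smooth_integrable simp: sc d)
  also have "\<dots> = (\<Sum>j<N. integral {0..L} (\<lambda>x. c1 j x * (Dv ^^ j) d1 x) + integral {0..L} (\<lambda>x. c2 j x * (Dv ^^ j) d2 x))"
    by (rule sum.cong[OF refl], rule integral_add) (auto intro!: smooth_integrable simp: sc d)
  also have "\<dots> = (\<Sum>j<N. integral {0..L} (\<lambda>x. (-1)^j * (Dv ^^ j) (c1 j) x * d1 x) + integral {0..L} (\<lambda>x. (-1)^j * (Dv ^^ j) (c2 j) x * d2 x))"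
    by (simp only: i1 i2)
  also have "\<dots> = (\<Sum>j<N. integral {0..L} (\<lambda>x. (-1)^j * (Dv ^^ j) (c1 j) x * d1 x + (-1)^j * (Dv ^^ j) (c2 j) x * d2 x))"
    by (rule sum.cong[OF refl], rule integral_add[symmetric]) (auto intro!: smooth_integrable simp: sc d)
  also have "\<dots> = integral {0..L} (\<lambda>x. \<Sum>j<N. (-1)^j * (Dv ^^ j) (c1 j) x * d1 x + (-1)^j * (Dv ^^ j) (c2 j) x * d2 x)"
    by (rule integral_sum[symmetric]) (auto intro!: smooth_integrable simp: sc d)
  also have "\<dots> = integral {0..L} (\<lambda>x. E1 N h k1 k2 x * d1 x + E2 N h k1 k2 x * d2 x)"
  proof (rule arg_cong[where f="integral _"], rule ext)
    fix x
    have e1: "E1 N h k1 k2 x = (\<Sum>j<N. (-1)^j * (Dv ^^ j) (c1 j) x)" by (simp add: E1_def c1_def)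
    have e2: "E2 N h k1 k2 x = (\<Sum>j<N. (-1)^j * (Dv ^^ j) (c2 j) x)" by (simp add: E2_def c2_def)
    show "(\<Sum>j<N. (-1)^j * (Dv ^^ j) (c1 j) x * d1 x + (-1)^j * (Dv ^^ j) (c2 j) x * d2 x) =
          E1 N h k1 k2 x * d1 x + E2 N h k1 k2 x * d2 x"
      unfolding e1 e2 sum_distrib_right sum.distrib ..
  qed
  finally have fin: "integral {0..L} (\<lambda>x. \<Sum>j<N. c1 j x * (Dv ^^ j) d1 x + c2 j x * (Dv ^^ j) d2 x)
      = integral {0..L} (\<lambda>x. E1 N h k1 k2 x * d1 x + E2 N h k1 k2 x * d2 x)" .
  have eq: "(\<lambda>x. \<Sum>j<N. pd1 j h (jet k1 x) (jet k2 x) * (Dv ^^ j) d1 x + pd2 j h (jet k1 x) (jet k2 x) * (Dv ^^ j) d2 x)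
      = (\<lambda>x. \<Sum>j<N. c1 j x * (Dv ^^ j) d1 x + c2 j x * (Dv ^^ j) d2 x)"
    unfolding c1_def c2_def by (rule refl)
  show ?thesis by (subst eq) (rule fin)
qed

definition Q2 :: "(real \<Rightarrow> real \<Rightarrow> 'a::real_normed_vector) \<Rightarrow> bool" where
  "Q2 G \<longleftrightarrow> (\<forall>t x. (\<lambda>s. G s x) differentiable (at t)) \<and> (\<forall>t x. G t differentiable (at x)) \<and>
             continuous_on UNIV (\<lambda>p. G (fst p) (snd p))"

lemma smooth2_Q2: "smooth2 F \<longleftrightarrow> (\<forall>ws. Q2 (pds2 ws F))"
  unfolding smooth2_def Q2_def ..

lemma pds2_append: "pds2 ws' (pds2 ws F) = pds2 (ws' @ ws) F"
  by (induction ws') auto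

definition S2n :: "nat \<Rightarrow> (real \<Rightarrow> real \<Rightarrow> 'a::real_normed_vector) \<Rightarrow> bool" where
  "S2n n G \<longleftrightarrow> (\<forall>ws. length ws \<le> n \<longrightarrow> Q2 (pds2 ws G))"

lemma S2n_0: "S2n 0 G \<longleftrightarrow> Q2 G"
  unfolding S2n_def by auto

lemma S2n_Suc: "S2n (Suc n) G \<longleftrightarrow> Q2 G \<and> S2n n (Dt G) \<and> S2n n (Dx G)"
proof
  assume a: "S2n (Suc n) G"
  have t: "pds2 ws (Dt G) = pds2 (ws @ [True]) G" "pds2 ws (Dx G) = pds2 (ws @ [False]) G" for ws
    using pds2_append[of ws "[True]" G] pds2_append[of ws "[False]" G] by simp_all
  show "Q2 G \<and> S2n n (Dt G) \<and> S2n n (Dx G)"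
  proof (intro conjI)
    show "Q2 G" using a[unfolded S2n_def, rule_format, of "[]"] by simp
    show "S2n n (Dt G)" unfolding S2n_def t using a unfolding S2n_def by auto
    show "S2n n (Dx G)" unfolding S2n_def t using a unfolding S2n_def by auto
  qed
next
  assume a: "Q2 G \<and> S2n n (Dt G) \<and> S2n n (Dx G)"
  show "S2n (Suc n) G" unfolding S2n_def
  proof (intro allI impI)
    fix ws :: "bool list" assume l: "length ws \<le> Suc n"
    show "Q2 (pds2 ws G)"
    proof (cases ws rule: rev_cases)
      case Nil then show ?thesis using a by simp
    next
      case (snoc ws' b)
      then have "pds2 ws G = pds2 ws' (pds2 [b] G)" by (simp only: pds2_append append_Cons append_Nil)
      then show ?thesis using a l snoc unfolding S2n_def by (cases b) auto
    qed
  qed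
qed

lemma smooth2_S2n: "smooth2 G \<longleftrightarrow> (\<forall>n. S2n n G)"
  unfolding smooth2_Q2 S2n_def by auto

lemma smooth2_iff: "smooth2 G \<longleftrightarrow> Q2 G \<and> smooth2 (Dt G) \<and> smooth2 (Dx G)"
  unfolding smooth2_S2n
proof safe
  assume "\<forall>n. S2n n G" then show "Q2 G" using S2n_0 by blast
next
  fix n assume "\<forall>n. S2n n G" then show "S2n n (Dt G)" using S2n_Suc by blast
next
  fix n assume "\<forall>n. S2n n G" then show "S2n n (Dx G)" using S2n_Suc by blast
next
  fix n assume "Q2 G" "\<forall>n. S2n n (Dt G)" "\<forall>n. S2n n (Dx G)"
  then show "S2n n G" by (cases n) (auto simp: S2n_0 S2n_Suc)
qed

lemma smooth2_Dt: "smooth2 G \<Longrightarrow> smooth2 (Dt G)" using smooth2_iff by blast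
lemma smooth2_Dx: "smooth2 G \<Longrightarrow> smooth2 (Dx G)" using smooth2_iff by blast
lemma smooth2_Q: "smooth2 G \<Longrightarrow> Q2 G" using smooth2_iff by blast
lemma smooth2_pds2: "smooth2 G \<Longrightarrow> smooth2 (pds2 ws G)"
  by (induction ws) (auto intro: smooth2_Dt smooth2_Dx)

lemma Q2_dt: "Q2 G \<Longrightarrow> (\<lambda>s. G s x) differentiable (at t)" unfolding Q2_def by blast
lemma Q2_dx: "Q2 G \<Longrightarrow> G t differentiable (at x)" unfolding Q2_def by blast
lemma Q2_cont: "Q2 G \<Longrightarrow> continuous_on UNIV (\<lambda>p. G (fst p) (snd p))" unfolding Q2_def by blast

lemma Dt_vec: "Q2 G \<Longrightarrow> ((\<lambda>s. G s x) has_vector_derivative Dt G t x) (at t)"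
  unfolding Dt_def by (rule vector_derivative_works[THEN iffD1], rule Q2_dt)
lemma Dx_vec: "Q2 G \<Longrightarrow> (G t has_vector_derivative Dx G t x) (at x)"
  unfolding Dx_def by (rule vector_derivative_works[THEN iffD1], rule Q2_dx)
lemma Dt_real: "Q2 (G::real\<Rightarrow>real\<Rightarrow>real) \<Longrightarrow> ((\<lambda>s. G s x) has_real_derivative Dt G t x) (at t)"
  using Dt_vec has_real_derivative_iff_has_vector_derivative by blast
lemma Dx_real: "Q2 (G::real\<Rightarrow>real\<Rightarrow>real) \<Longrightarrow> (G t has_real_derivative Dx G t x) (at x)"
  using Dx_vec has_real_derivative_iff_has_vector_derivative by blast
lemma Dt_unique: "((\<lambda>s. G s x) has_vector_derivative d) (at t) \<Longrightarrow> Dt G t x = d"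
  unfolding Dt_def by (rule vector_derivative_at)
lemma Dx_unique: "(G t has_vector_derivative d) (at x) \<Longrightarrow> Dx G t x = d"
  unfolding Dx_def by (rule vector_derivative_at)
lemma Dt_unique_real: "((\<lambda>s. G s x) has_real_derivative d) (at t) \<Longrightarrow> Dt G t x = (d::real)"
  by (rule Dt_unique) (simp add: has_real_derivative_iff_has_vector_derivative)
lemma Dx_unique_real: "(G t has_real_derivative d) (at x) \<Longrightarrow> Dx G t x = (d::real)"
  by (rule Dx_unique) (simp add: has_real_derivative_iff_has_vector_derivative)

lemma Dx_Dv: "Dx G t = Dv (G t)"
  by (simp add: Dx_def Dv_def fun_eq_iff)

lemma pds2_Dv: "pds2 (replicate n False) G t = (Dv ^^ n) (G t)"
  by (induction n) (auto simp: Dx_Dv)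

lemma Q2_add: "Q2 F \<Longrightarrow> Q2 G \<Longrightarrow> Q2 (\<lambda>t x. F t x + G t x)"
  unfolding Q2_def by (auto intro!: continuous_on_add)
lemma Q2_minus: "Q2 F \<Longrightarrow> Q2 (\<lambda>t x. - F t x)"
  unfolding Q2_def by (auto intro!: continuous_on_minus)
lemma Q2_const: "Q2 (\<lambda>t x. c)"
  unfolding Q2_def by auto
lemma Q2_mult: "Q2 F \<Longrightarrow> Q2 G \<Longrightarrow> Q2 (\<lambda>t x. (F t x::real) * G t x)"
  unfolding Q2_def by (auto intro!: continuous_on_mult)

lemma Dt_add: "Q2 F \<Longrightarrow> Q2 G \<Longrightarrow> Dt (\<lambda>t x. F t x + G t x) = (\<lambda>t x. Dt F t x + Dt G t x)"
  by (intro ext Dt_unique has_vector_derivative_add Dt_vec)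
lemma Dx_add: "Q2 F \<Longrightarrow> Q2 G \<Longrightarrow> Dx (\<lambda>t x. F t x + G t x) = (\<lambda>t x. Dx F t x + Dx G t x)"
  by (intro ext Dx_unique has_vector_derivative_add Dx_vec)
lemma Dt_minus: "Q2 F \<Longrightarrow> Dt (\<lambda>t x. - F t x) = (\<lambda>t x. - Dt F t x)"
  by (intro ext Dt_unique has_vector_derivative_minus Dt_vec)
lemma Dx_minus: "Q2 F \<Longrightarrow> Dx (\<lambda>t x. - F t x) = (\<lambda>t x. - Dx F t x)"
  by (intro ext Dx_unique has_vector_derivative_minus Dx_vec)
lemma Dt_const: "Dt (\<lambda>t x. c) = (\<lambda>t x. 0)"
  by (intro ext Dt_unique) auto
lemma Dx_const: "Dx (\<lambda>t x. c) = (\<lambda>t x. 0)"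
  by (intro ext Dx_unique) auto
lemma Dt_mult: "Q2 F \<Longrightarrow> Q2 G \<Longrightarrow> Dt (\<lambda>t x. (F t x::real) * G t x) = (\<lambda>t x. Dt F t x * G t x + F t x * Dt G t x)"
  by (intro ext Dt_unique_real) (auto intro!: derivative_eq_intros Dt_real)
lemma Dx_mult: "Q2 F \<Longrightarrow> Q2 G \<Longrightarrow> Dx (\<lambda>t x. (F t x::real) * G t x) = (\<lambda>t x. Dx F t x * G t x + F t x * Dx G t x)"
proof (intro ext Dx_unique_real)
  fix t x assume "Q2 F" "Q2 G"
  then show "((\<lambda>x. F t x * G t x) has_real_derivative Dx F t x * G t x + F t x * Dx G t x) (at x)"
    using DERIV_mult[OF Dx_real[of F t x] Dx_real[of G t x]] by (simp add: algebra_simps)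
qed

lemma S2n_add: "S2n n F \<Longrightarrow> S2n n G \<Longrightarrow> S2n n (\<lambda>t x. F t x + G t x)"
proof (induction n arbitrary: F G)
  case 0 then show ?case by (simp add: S2n_0 Q2_add)
next
  case (Suc n)
  then have q: "Q2 F" "Q2 G" by (auto simp: S2n_Suc)
  show ?case using Suc by (auto simp: S2n_Suc Q2_add Dt_add[OF q] Dx_add[OF q])
qed

lemma S2n_minus: "S2n n F \<Longrightarrow> S2n n (\<lambda>t x. - F t x)"
proof (induction n arbitrary: F)
  case 0 then show ?case by (simp add: S2n_0 Q2_minus)
next
  case (Suc n)
  then have q: "Q2 F" by (auto simp: S2n_Suc)
  show ?case using Suc by (auto simp: S2n_Suc Q2_minus Dt_minus[OF q] Dx_minus[OF q])
qed

lemma S2n_const: "S2n n (\<lambda>t x. c)"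
  by (induction n arbitrary: c) (auto simp: S2n_0 S2n_Suc Q2_const Dt_const Dx_const)

lemma S2n_mono: "S2n n F \<Longrightarrow> m \<le> n \<Longrightarrow> S2n m F"
  unfolding S2n_def by auto

lemma S2n_mult: "S2n n F \<Longrightarrow> S2n n G \<Longrightarrow> S2n n (\<lambda>t x. (F t x::real) * G t x)"
proof (induction n arbitrary: F G)
  case 0 then show ?case by (simp add: S2n_0 Q2_mult)
next
  case (Suc n)
  then have q: "Q2 F" "Q2 G" by (auto simp: S2n_Suc)
  have "S2n n F" "S2n n G" using Suc.prems S2n_mono le_SucI by blast+
  then show ?case using Suc by (auto simp: S2n_Suc Q2_mult Dt_mult[OF q] Dx_mult[OF q] intro!: S2n_add)
qed

lemma smooth2_add: "smooth2 F \<Longrightarrow> smooth2 G \<Longrightarrow> smooth2 (\<lambda>t x. F t x + G t x)"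
  by (simp add: smooth2_S2n S2n_add)
lemma smooth2_minus: "smooth2 F \<Longrightarrow> smooth2 (\<lambda>t x. - F t x)"
  by (simp add: smooth2_S2n S2n_minus)
lemma smooth2_diff: "smooth2 F \<Longrightarrow> smooth2 G \<Longrightarrow> smooth2 (\<lambda>t x. F t x - G t x)"
  using smooth2_add[of F "\<lambda>t x. - G t x"] smooth2_minus[of G] by simp
lemma smooth2_const: "smooth2 (\<lambda>t x. c)"
  by (simp add: smooth2_S2n S2n_const)
lemma smooth2_mult: "smooth2 F \<Longrightarrow> smooth2 G \<Longrightarrow> smooth2 (\<lambda>t x. (F t x::real) * G t x)"
  by (simp add: smooth2_S2n S2n_mult)

lemma cont_slice: "continuous_on UNIV (\<lambda>p. G (fst p) (snd p)) \<Longrightarrow> continuous_on S (G s)"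
proof -
  assume c: "continuous_on UNIV (\<lambda>p. G (fst p) (snd p))"
  have "continuous_on S (\<lambda>z. G (fst (s, z)) (snd (s, z)))"
    by (rule continuous_on_compose2[OF c]) (auto intro!: continuous_intros)
  then show ?thesis by simp
qed

lemma clairaut:
  fixes F :: "real \<Rightarrow> real \<Rightarrow> real"
  assumes sF: "smooth2 F"
  shows "Dt (Dx F) t x = Dx (Dt F) t x"
proof -
  define H where "H = Dx F"
  define G where "G = Dt H"
  define a where "a = x - 1"
  define b where "b = x + 1"
  have QF: "Q2 F" and QH: "Q2 H" and QG: "Q2 G"
    using sF unfolding H_def G_def by (auto intro!: smooth2_Q smooth2_Dx smooth2_Dt)
  have c1: "F s y = F s a + integral {a..y} (H s)" if "a \<le> y" for s y
  proof -
    have "(H s has_integral F s y - F s a) {a..y}"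
      by (rule fundamental_theorem_of_calculus[OF that])
         (auto intro!: has_vector_derivative_at_within Dx_vec[OF QF] simp: H_def)
    then show ?thesis by (simp add: integral_unique)
  qed
  have c2: "((\<lambda>s. integral {a..y} (H s)) has_real_derivative integral {a..y} (G t)) (at t)" for y
  proof -
    have "((\<lambda>s. integral (cbox a y) (H s)) has_field_derivative integral (cbox a y) (G t)) (at t within UNIV)"
    proof (rule leibniz_rule_field_derivative)
      show "((\<lambda>s. H s z) has_field_derivative G s z) (at s within UNIV)" for s z
        unfolding G_def using Dt_real[OF QH] by simp
      show "H s integrable_on cbox a y" for s
        unfolding cbox_interval by (rule integrable_continuous_interval, rule cont_slice, rule Q2_cont[OF QH])
      show "continuous_on (UNIV \<times> cbox a y) (\<lambda>(s, z). G s z)"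
        using continuous_on_subset[OF Q2_cont[OF QG]] by (simp add: split_beta')
    qed auto
    then show ?thesis by (simp add: cbox_interval)
  qed
  have c3: "Dt F t y = Dt F t a + integral {a..y} (G t)" if "a \<le> y" for y
  proof -
    have e: "(\<lambda>s. F s y) = (\<lambda>s. F s a + integral {a..y} (H s))" using c1[OF that] by auto
    have "((\<lambda>s. F s y) has_real_derivative Dt F t a + integral {a..y} (G t)) (at t)"
      unfolding e by (rule DERIV_add[OF Dt_real[OF QF] c2])
    then show ?thesis by (rule Dt_unique_real)
  qed
  have c4: "((\<lambda>u. Dt F t a + integral {a..u} (G t)) has_vector_derivative G t x) (at x)"
  proof -
    have "((\<lambda>u. integral {a..u} (G t)) has_vector_derivative G t x) (at x within {a..b})"
      by (rule integral_has_vector_derivative) (auto intro!: cont_slice Q2_cont[OF QG] simp: a_def b_def)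
    moreover have "at x within {a..b} = at x" by (rule at_within_Icc_at) (auto simp: a_def b_def)
    ultimately have "((\<lambda>u. integral {a..u} (G t)) has_vector_derivative G t x) (at x)" by simp
    then show ?thesis by (intro derivative_eq_intros) auto
  qed
  have "((\<lambda>u. Dt F t u) has_vector_derivative G t x) (at x)"
  proof (rule has_vector_derivative_transform_within_open[OF c4, of "{a<..<b}"])
    show "x \<in> {a<..<b}" by (simp add: a_def b_def)
    fix y assume "y \<in> {a<..<b}"
    then have "a \<le> y" by simp
    then show "Dt F t a + integral {a..y} (G t) = Dt F t y" by (rule c3[symmetric])
  qed simp
  then have "Dx (Dt F) t x = G t x" by (intro Dx_unique) simp
  then show ?thesis unfolding G_def H_def by simp
qed

lemma clairaut_n:
  fixes F :: "real \<Rightarrow> real \<Rightarrow> real"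
  assumes sF: "smooth2 F"
  shows "Dt (pds2 (replicate n False) F) = pds2 (replicate n False) (Dt F)"
proof (induction n)
  case 0 then show ?case by simp
next
  case (Suc n)
  have "Dt (pds2 (replicate (Suc n) False) F) = Dt (Dx (pds2 (replicate n False) F))" by simp
  also have "\<dots> = Dx (Dt (pds2 (replicate n False) F))"
    by (intro ext clairaut smooth2_pds2 sF)
  also have "\<dots> = pds2 (replicate (Suc n) False) (Dt F)" using Suc by simp
  finally show ?case .
qed

lemma Q2_comp: "Q2 G \<Longrightarrow> Q2 (\<lambda>t x. G t x $ i)"
  unfolding Q2_def
  apply (intro conjI allI)
  subgoal for t x by (rule differentiableI_vector, rule bounded_linear.has_vector_derivative[OF bounded_linear_vec_nth],
        rule Dt_vec) (simp add: Q2_def)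
  subgoal for t x by (rule differentiableI_vector, rule bounded_linear.has_vector_derivative[OF bounded_linear_vec_nth],
        rule Dx_vec) (simp add: Q2_def)
  by (auto intro!: continuous_on_component)

lemma Dt_comp: "Q2 G \<Longrightarrow> Dt (\<lambda>t x. G t x $ i) = (\<lambda>t x. Dt G t x $ i)"
  by (intro ext Dt_unique bounded_linear.has_vector_derivative[OF bounded_linear_vec_nth] Dt_vec)
lemma Dx_comp: "Q2 G \<Longrightarrow> Dx (\<lambda>t x. G t x $ i) = (\<lambda>t x. Dx G t x $ i)"
  by (intro ext Dx_unique bounded_linear.has_vector_derivative[OF bounded_linear_vec_nth] Dx_vec)

lemma pds2_comp: "smooth2 G \<Longrightarrow> pds2 ws (\<lambda>t x. G t x $ i) = (\<lambda>t x. pds2 ws G t x $ i)"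
proof (induction ws)
  case Nil then show ?case by simp
next
  case (Cons b ws)
  have q: "Q2 (pds2 ws G)" using Cons.prems smooth2_pds2 smooth2_Q by blast
  show ?case using Cons q by (cases b) (simp_all add: Dt_comp Dx_comp)
qed

lemma smooth2_comp: "smooth2 G \<Longrightarrow> smooth2 (\<lambda>t x. G t x $ i)"
  unfolding smooth2_Q2 by (simp add: pds2_comp Q2_comp smooth2_Q2[symmetric] smooth2_pds2 smooth2_Q)

lemma det3_expand: "det3 a b c =
    a$1 * b$2 * c$3 + a$2 * b$3 * c$1 + a$3 * b$1 * c$2 - a$1 * b$3 * c$2 - a$2 * b$1 * c$3 - a$3 * b$2 * c$1"
  unfolding det3_def det_3 by simp

lemma smooth2_det3:
  assumes "smooth2 A" "smooth2 B" "smooth2 C"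
  shows "smooth2 (\<lambda>t x. det3 (A t x) (B t x) (C t x))"
  unfolding det3_expand
  using assms by (intro smooth2_add smooth2_diff smooth2_mult smooth2_comp)

lemma Dv2: "(Dv ^^ 2) f = Dv (Dv f)" by (simp add: numeral_eq_Suc)
lemma Dv3: "(Dv ^^ 3) f = Dv (Dv (Dv f))" by (simp add: numeral_eq_Suc)
lemma Dv4: "(Dv ^^ 4) f = Dv (Dv (Dv (Dv f)))" by (simp add: numeral_eq_Suc)
lemma Dv5: "(Dv ^^ 5) f = Dv (Dv (Dv (Dv (Dv f))))" by (simp add: numeral_eq_Suc)

lemma Dvs_add: "smooth_fn f \<Longrightarrow> smooth_fn g \<Longrightarrow> Dv (\<lambda>y. f y + g y) = (\<lambda>y. Dv f y + Dv g y)"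
  by (rule Dv_add) simp_all
lemma Dvs_diff: "smooth_fn f \<Longrightarrow> smooth_fn g \<Longrightarrow> Dv (\<lambda>y. f y - g y) = (\<lambda>y. Dv f y - Dv g y)"
  by (rule Dv_diff) simp_all
lemma Dvs_minus: "smooth_fn f \<Longrightarrow> Dv (\<lambda>y. - f y) = (\<lambda>y. - Dv f y)"
  by (rule Dv_minus) simp_all
lemma Dvs_mult: "smooth_fn f \<Longrightarrow> smooth_fn g \<Longrightarrow> Dv (\<lambda>y. (f y::real) * g y) = (\<lambda>y. Dv f y * g y + f y * Dv g y)"
  by (rule Dv_mult) simp_all
lemma Dvs_scaleR: "smooth_fn f \<Longrightarrow> smooth_fn g \<Longrightarrow> Dv (\<lambda>y. (f y::real) *\<^sub>R g y) = (\<lambda>y. Dv f y *\<^sub>R g y + f y *\<^sub>R Dv g y)"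
  by (rule Dv_scaleR) simp_all

lemmas Dvs_rules = Dvs_add Dvs_diff Dvs_minus Dvs_mult Dv_const

definition fr :: "(real \<Rightarrow> real^3) \<Rightarrow> (real \<Rightarrow> real) \<Rightarrow> (real \<Rightarrow> real) \<Rightarrow> (real \<Rightarrow> real) \<Rightarrow> real \<Rightarrow> real^3" where
  "fr \<gamma> p q s = (\<lambda>x. p x *\<^sub>R \<gamma> x + q x *\<^sub>R Dv \<gamma> x + s x *\<^sub>R Dv (Dv \<gamma>) x)"

lemma Dv_fr:
  assumes g: "smooth_fn \<gamma>" and p: "smooth_fn p" "smooth_fn q" "smooth_fn s"
    and e3: "\<And>x. Dv (Dv (Dv \<gamma>)) x = \<alpha> x *\<^sub>R \<gamma> x + k x *\<^sub>R Dv \<gamma> x"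
  shows "Dv (fr \<gamma> p q s) = fr \<gamma> (\<lambda>x. Dv p x + s x * \<alpha> x) (\<lambda>x. Dv q x + p x + s x * k x) (\<lambda>x. Dv s x + q x)"
  unfolding fr_def using g p
  by (simp add: Dvs_add Dvs_scaleR e3 algebra_simps)

definition cdet :: "real \<Rightarrow> real \<Rightarrow> real \<Rightarrow> real \<Rightarrow> real \<Rightarrow> real \<Rightarrow> real \<Rightarrow> real \<Rightarrow> real \<Rightarrow> real" where
  "cdet a1 a2 a3 b1 b2 b3 c1 c2 c3 = a1*b2*c3 + a2*b3*c1 + a3*b1*c2 - a1*b3*c2 - a2*b1*c3 - a3*b2*c1"

lemma det3_lin:
  "det3 (p1 *\<^sub>R u + q1 *\<^sub>R v + s1 *\<^sub>R w) (p2 *\<^sub>R u + q2 *\<^sub>R v + s2 *\<^sub>R w) (p3 *\<^sub>R u + q3 *\<^sub>R v + s3 *\<^sub>R w)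
   = cdet p1 q1 s1 p2 q2 s2 p3 q3 s3 * det3 u v w"
  unfolding det3_expand cdet_def by (simp add: algebra_simps)

lemma det3_fr:
  "det3 (fr \<gamma> p1 q1 s1 x) (fr \<gamma> p2 q2 s2 x) (fr \<gamma> p3 q3 s3 x)
   = cdet (p1 x) (q1 x) (s1 x) (p2 x) (q2 x) (s2 x) (p3 x) (q3 x) (s3 x) * det3 (\<gamma> x) (Dv \<gamma> x) (Dv (Dv \<gamma>) x)"
  unfolding fr_def by (rule det3_lin)

lemma det3_add1: "det3 (u + v) w z = det3 u w z + det3 v w z" by (simp add: det3_expand algebra_simps)
lemma det3_add2: "det3 w (u + v) z = det3 w u z + det3 w v z" by (simp add: det3_expand algebra_simps)
lemma det3_add3: "det3 w z (u + v) = det3 w z u + det3 w z v" by (simp add: det3_expand algebra_simps)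
lemma det3_diff1: "det3 (u - v) w z = det3 u w z - det3 v w z" by (simp add: det3_expand algebra_simps)
lemma det3_diff2: "det3 w (u - v) z = det3 w u z - det3 w v z" by (simp add: det3_expand algebra_simps)
lemma det3_diff3: "det3 w z (u - v) = det3 w z u - det3 w z v" by (simp add: det3_expand algebra_simps)
lemma det3_neg1: "det3 (- u) w z = - det3 u w z" by (simp add: det3_expand algebra_simps)
lemma det3_neg2: "det3 w (- u) z = - det3 w u z" by (simp add: det3_expand algebra_simps)
lemma det3_neg3: "det3 w z (- u) = - det3 w z u" by (simp add: det3_expand algebra_simps)
lemma det3_scale1: "det3 (c *\<^sub>R u) w z = c * det3 u w z" by (simp add: det3_expand algebra_simps)
lemma det3_scale2: "det3 w (c *\<^sub>R u) z = c * det3 w u z" by (simp add: det3_expand algebra_simps)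
lemma det3_scale3: "det3 w z (c *\<^sub>R u) = c * det3 w z u" by (simp add: det3_expand algebra_simps)
lemma det3_zero1: "det3 0 w z = 0" by (simp add: det3_expand)
lemma det3_zero2: "det3 w 0 z = 0" by (simp add: det3_expand)
lemma det3_zero3: "det3 w z 0 = 0" by (simp add: det3_expand)
lemma det3_alt12: "det3 u u z = 0" by (simp add: det3_expand algebra_simps)
lemma det3_alt13: "det3 u z u = 0" by (simp add: det3_expand algebra_simps)
lemma det3_alt23: "det3 z u u = 0" by (simp add: det3_expand algebra_simps)
lemma det3_swap12: "det3 v u w = - det3 u v w" by (simp add: det3_expand algebra_simps)
lemma det3_swap13: "det3 w v u = - det3 u v w" by (simp add: det3_expand algebra_simps)
lemma det3_swap23: "det3 u w v = - det3 u v w" by (simp add: det3_expand algebra_simps)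
lemma det3_cyc: "det3 v w u = det3 u v w" by (simp add: det3_expand algebra_simps)
lemma det3_cyc2: "det3 w u v = det3 u v w" by (simp add: det3_expand algebra_simps)

lemmas det3_ml = det3_add1 det3_add2 det3_add3 det3_diff1 det3_diff2 det3_diff3 det3_neg1 det3_neg2 det3_neg3
  det3_scale1 det3_scale2 det3_scale3 det3_zero1 det3_zero2 det3_zero3 det3_alt12 det3_alt13 det3_alt23

lemma frame_dets:
  assumes "det3 g0 g1 g2 = 1"
  shows "det3 g0 g1 g2 = 1" "det3 g1 g0 g2 = -1" "det3 g2 g1 g0 = -1" "det3 g0 g2 g1 = -1"
        "det3 g1 g2 g0 = 1" "det3 g2 g0 g1 = 1"
  using assms det3_swap12[of g1 g0 g2] det3_swap13[of g2 g1 g0] det3_swap23[of g0 g2 g1]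
     det3_cyc[of g0 g1 g2] det3_cyc2[of g0 g1 g2] by simp_all

lemma smooth_divide[simp]: "smooth_fn f \<Longrightarrow> smooth_fn (\<lambda>y. (f y::real) / c)"
  using smooth_mult[of f "\<lambda>y. inverse c"] by (simp add: divide_inverse)
lemma Dvs_divide: "smooth_fn f \<Longrightarrow> Dv (\<lambda>y. (f y::real) / c) = (\<lambda>y. Dv f y / c)"
  using Dvs_mult[of f "\<lambda>y. inverse c"] by (simp add: divide_inverse Dv_const)

lemma V1:
  fixes \<gamma> :: "real \<Rightarrow> real^3" and k1 k2 a b :: "real \<Rightarrow> real"
  assumes g: "smooth_fn \<gamma>" and k: "smooth_fn k1" "smooth_fn k2" and ab: "smooth_fn a" "smooth_fn b"
   and det1: "det3 (\<gamma> x) (Dv \<gamma> x) (Dv (Dv \<gamma>) x) = 1"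
   and e3: "Dv (Dv (Dv \<gamma>)) = (\<lambda>x. (Dv k1 x + k2 x) *\<^sub>R \<gamma> x + k1 x *\<^sub>R Dv \<gamma> x)"
   and r: "r = (\<lambda>x. - Dv a x - 1/3 * (Dv (Dv b) x + 2 * k1 x * b x))"
   and X: "X = (\<lambda>x. r x *\<^sub>R \<gamma> x + a x *\<^sub>R Dv \<gamma> x + b x *\<^sub>R Dv (Dv \<gamma>) x)"
  shows "det3 (X x) (Dv (Dv (Dv \<gamma>)) x) (Dv (Dv \<gamma>) x) + det3 (\<gamma> x) (Dv (Dv (Dv X)) x) (Dv (Dv \<gamma>) x)
       + det3 (\<gamma> x) (Dv (Dv (Dv \<gamma>)) x) (Dv (Dv X) x) = Pop1 k1 k2 a b x"
  unfolding X r Pop1_def Dv2 Dv3 Dv4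
  using g k ab
  apply (simp only: Dvs_add Dvs_diff Dvs_minus Dvs_mult Dvs_scaleR Dvs_divide Dv_const e3
     smooth_add smooth_diff_fn smooth_minus smooth_mult smooth_scaleR smooth_divide smooth_const smooth_Dv g k ab)
  apply (simp only: det3_ml frame_dets[OF det1])
  apply (simp add: algebra_simps)
  done

lemma V2:
  fixes \<gamma> :: "real \<Rightarrow> real^3" and k1 k2 a b :: "real \<Rightarrow> real"
  assumes g: "smooth_fn \<gamma>" and k: "smooth_fn k1" "smooth_fn k2" and ab: "smooth_fn a" "smooth_fn b"
   and det1: "det3 (\<gamma> x) (Dv \<gamma> x) (Dv (Dv \<gamma>) x) = 1"
   and e3: "Dv (Dv (Dv \<gamma>)) = (\<lambda>x. (Dv k1 x + k2 x) *\<^sub>R \<gamma> x + k1 x *\<^sub>R Dv \<gamma> x)"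
   and r: "r = (\<lambda>x. - Dv a x - 1/3 * (Dv (Dv b) x + 2 * k1 x * b x))"
   and X: "X = (\<lambda>x. r x *\<^sub>R \<gamma> x + a x *\<^sub>R Dv \<gamma> x + b x *\<^sub>R Dv (Dv \<gamma>) x)"
  shows "det3 (Dv (Dv (Dv X)) x) (Dv \<gamma> x) (Dv (Dv \<gamma>) x) + det3 (Dv (Dv (Dv \<gamma>)) x) (Dv X x) (Dv (Dv \<gamma>) x)
       + det3 (Dv (Dv (Dv \<gamma>)) x) (Dv \<gamma> x) (Dv (Dv X) x) - Dv (Pop1 k1 k2 a b) x = Pop2 k1 k2 a b x"
  unfolding X r Pop1_def Pop2_def Dv2 Dv3 Dv4 Dv5
  using g k ab
  apply (simp only: Dvs_add Dvs_diff Dvs_minus Dvs_mult Dvs_scaleR Dvs_divide Dv_const e3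
     smooth_add smooth_diff_fn smooth_minus smooth_mult smooth_scaleR smooth_divide smooth_const smooth_Dv g k ab)
  apply (simp only: det3_ml frame_dets[OF det1])
  apply (simp add: algebra_simps add_divide_distrib)
  done

lemma curve_e3:
  assumes c: "ca_curve L c k1 k2"
  shows "Dv (Dv (Dv c)) = (\<lambda>x. (Dv k1 x + k2 x) *\<^sub>R c x + k1 x *\<^sub>R Dv c x)"
proof -
  have s: "smooth_fn c" "smooth_fn k1" "smooth_fn k2" using c unfolding ca_curve_def by auto
  have e: "(Dv ^^ 3) c x = Dv (\<lambda>y. k1 y *\<^sub>R c y) x + k2 x *\<^sub>R c x" for x
    using c unfolding ca_curve_def by blast
  show ?thesis
    using e unfolding Dv3 Dvs_scaleR[OF s(2,1)] by (auto simp: fun_eq_iff algebra_simps)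
qed

lemma curve_det1:
  assumes c: "ca_curve L c k1 k2"
  shows "det3 (c x) (Dv c x) (Dv (Dv c) x) = 1"
  using c unfolding ca_curve_def Dv2 by blast

lemma curve_k1:
  assumes c: "ca_curve L c k1 k2"
  shows "k1 x = det3 (c x) ((Dv ^^ 3) c x) ((Dv ^^ 2) c x)"
  unfolding Dv3 Dv2 curve_e3[OF c]
  by (simp only: det3_ml frame_dets[OF curve_det1[OF c]] ; simp)

lemma curve_k2:
  assumes c: "ca_curve L c k1 k2"
  shows "k2 x = det3 ((Dv ^^ 3) c x) (Dv c x) ((Dv ^^ 2) c x) - Dv k1 x"
  unfolding Dv3 Dv2 curve_e3[OF c]
  by (simp only: det3_ml frame_dets[OF curve_det1[OF c]] ; simp)

lemma smooth2_slice: "smooth2 G \<Longrightarrow> smooth_fn (G t)"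
  unfolding smooth_fn_def
proof (intro allI)
  fix n x assume "smooth2 G"
  then have "Q2 (pds2 (replicate n False) G)" by (intro smooth2_Q smooth2_pds2)
  then show "(Dv ^^ n) (G t) differentiable at x" unfolding pds2_Dv[symmetric] by (rule Q2_dx)
qed

lemma periodic_Dv_vec:
  assumes p: "periodic_fn L f" and d: "\<And>x. f differentiable at x"
  shows "periodic_fn L (Dv f)"
  unfolding periodic_fn_def
proof
  fix x
  have "(((\<lambda>y. f y) \<circ> (\<lambda>y. y + L)) has_vector_derivative (1 *\<^sub>R Dv f (x + L))) (at x)"
    by (rule vector_diff_chain_at) (auto intro!: derivative_eq_intros Dv_vec d)
  moreover have "((\<lambda>y. f y) \<circ> (\<lambda>y. y + L)) = f" using p by (simp add: periodic_fn_def o_def)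
  ultimately show "Dv f (x + L) = Dv f x" using Dv_unique_vec by (metis scaleR_one)
qed

lemma periodic_Dvn_vec: "periodic_fn L f \<Longrightarrow> smooth_fn f \<Longrightarrow> periodic_fn L ((Dv ^^ n) f)"
  by (induction n) (auto intro!: periodic_Dv_vec)

lemma det3_DERIV:
  assumes "(A has_vector_derivative A') (at t)" "(B has_vector_derivative B') (at t)" "(C has_vector_derivative C') (at t)"
  shows "((\<lambda>t. det3 (A t) (B t) (C t)) has_real_derivative det3 A' (B t) (C t) + det3 (A t) B' (C t) + det3 (A t) (B t) C') (at t)"
proof -
  have c: "((\<lambda>t. F t $ i) has_real_derivative F' $ i) (at t)" if "(F has_vector_derivative F') (at t)" for F F' and i :: 3
    using bounded_linear.has_vector_derivative[OF bounded_linear_vec_nth that, of i]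
    by (simp add: has_real_derivative_iff_has_vector_derivative)
  note cs = c[OF assms(1)] c[OF assms(2)] c[OF assms(3)]
  show ?thesis unfolding det3_expand
    by (rule derivative_eq_intros cs refl)+ (simp add: algebra_simps)
qed

lemma clairaut_vec_n:
  fixes G :: "real \<Rightarrow> real \<Rightarrow> real^3"
  assumes sG: "smooth2 G"
  shows "Dt (pds2 (replicate n False) G) t x = pds2 (replicate n False) (Dt G) t x"
proof (subst vec_eq_iff, intro allI)
  fix i
  have q: "Q2 (pds2 (replicate n False) G)" by (intro smooth2_Q smooth2_pds2 sG)
  have "Dt (pds2 (replicate n False) G) t x $ i = Dt (\<lambda>t x. pds2 (replicate n False) G t x $ i) t x"
    by (simp add: Dt_comp[OF q])
  also have "\<dots> = Dt (pds2 (replicate n False) (\<lambda>t x. G t x $ i)) t x"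
    by (simp add: pds2_comp[OF sG])
  also have "\<dots> = pds2 (replicate n False) (Dt (\<lambda>t x. G t x $ i)) t x"
    by (simp add: clairaut_n[OF smooth2_comp[OF sG]])
  also have "\<dots> = pds2 (replicate n False) (\<lambda>t x. Dt G t x $ i) t x"
    by (simp add: Dt_comp[OF smooth2_Q[OF sG]])
  also have "\<dots> = pds2 (replicate n False) (Dt G) t x $ i"
    by (simp add: pds2_comp[OF smooth2_Dt[OF sG]])
  finally show "Dt (pds2 (replicate n False) G) t x $ i = pds2 (replicate n False) (Dt G) t x $ i" .
qed

lemma rep3: "replicate 3 False = [False, False, False]" by (simp add: numeral_eq_Suc)
lemma rep2: "replicate 2 False = [False, False]" by (simp add: numeral_eq_Suc)
lemma rep1: "replicate 1 False = [False]" by simp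

lemma pds2_F3: "pds2 [False, False, False] G t = Dv (Dv (Dv (G t)))"
  using pds2_Dv[of 3 G t] by (simp add: rep3 Dv3)
lemma pds2_F2: "pds2 [False, False] G t = Dv (Dv (G t))"
  using pds2_Dv[of 2 G t] by (simp add: rep2 Dv2)
lemma pds2_F1: "pds2 [False] G t = Dv (G t)"
  using pds2_Dv[of 1 G t] by simp

lemma Dt_det3:
  fixes P Q R :: "real \<Rightarrow> real \<Rightarrow> real^3"
  assumes "Q2 P" "Q2 Q" "Q2 R"
  shows "Dt (\<lambda>t x. det3 (P t x) (Q t x) (R t x)) t x =
     det3 (Dt P t x) (Q t x) (R t x) + det3 (P t x) (Dt Q t x) (R t x) + det3 (P t x) (Q t x) (Dt R t x)"
  by (rule Dt_unique_real, rule det3_DERIV; rule Dt_vec, rule assms)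

theorem mainTheorem8:
  fixes L :: real and N :: nat and \<gamma> :: "real \<Rightarrow> real^3"
    and k1 k2 r0 :: "real \<Rightarrow> real" and g h :: jetfn
    and \<Gamma> :: "real \<Rightarrow> real \<Rightarrow> real^3" and K1 K2 :: "real \<Rightarrow> real \<Rightarrow> real"
  assumes curve: "ca_curve L \<gamma> k1 k2"
    and loc_g: "local_fn N g" and loc_h: "local_fn N h"
    and ns: "nonstretching k1 r0 (E1 N g k1 k2) (E2 N g k1 k2)"
    and fam_smooth: "smooth2 \<Gamma>"
    and fam_0: "\<Gamma> 0 = \<gamma>"
    and fam_curves: "\<forall>t. ca_curve L (\<Gamma> t) (K1 t) (K2 t)"
    and fam_vel: "\<forall>x. ((\<lambda>t. \<Gamma> t x) has_vector_derivative
                      vfield \<gamma> r0 (E1 N g k1 k2) (E2 N g k1 k2) x) (at 0)"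
  shows "((\<lambda>t. functional L h (K1 t) (K2 t)) has_real_derivative pbracket L N h g k1 k2) (at 0)"
proof -
  have L: "L > 0" and sg: "smooth_fn \<gamma>" and pg: "periodic_fn L \<gamma>" and sk: "smooth_fn k1" "smooth_fn k2"
    using curve unfolding ca_curve_def by auto
  have fc: "smooth_fn (\<Gamma> t)" "periodic_fn L (\<Gamma> t)" for t
    using fam_curves unfolding ca_curve_def by auto
  define a where "a = E1 N g k1 k2"
  define b where "b = E2 N g k1 k2"
  have sab: "smooth_fn a" "smooth_fn b" unfolding a_def b_def using E1_smooth E2_smooth loc_g sk by blast+
  define A1 where "A1 = (\<lambda>t x. det3 (\<Gamma> t x) (pds2 [False,False,False] \<Gamma> t x) (pds2 [False,False] \<Gamma> t x))"
  define A2 where "A2 = (\<lambda>t x. det3 (pds2 [False,False,False] \<Gamma> t x) (pds2 [False] \<Gamma> t x) (pds2 [False,False] \<Gamma> t x) - Dx A1 t x)"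
  have sA1: "smooth2 A1" unfolding A1_def
    by (intro smooth2_det3 smooth2_pds2 fam_smooth)
  have sA2: "smooth2 A2" unfolding A2_def
    by (intro smooth2_diff smooth2_det3 smooth2_pds2 fam_smooth smooth2_Dx sA1)
  have K1eq: "K1 t = A1 t" for t
  proof
    fix x show "K1 t x = A1 t x"
      unfolding A1_def pds2_F3 pds2_F2 curve_k1[OF fam_curves[rule_format, of t]] Dv3 Dv2 ..
  qed
  have K2eq: "K2 t = A2 t" for t
  proof
    fix x
    have "Dv (K1 t) x = Dx A1 t x" by (simp add: K1eq Dx_Dv)
    then show "K2 t x = A2 t x"
      unfolding A2_def pds2_F3 pds2_F2 pds2_F1 curve_k2[OF fam_curves[rule_format, of t]] Dv3 Dv2 by simp
  qed
  have k1eq: "k1 = A1 0" using K1eq[of 0] curve_k1[OF curve] curve_k1[OF fam_curves[rule_format, of 0]]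
    by (simp add: fam_0 fun_eq_iff)
  have k2eq: "k2 = A2 0" using K2eq[of 0] K1eq[of 0] curve_k2[OF curve] curve_k2[OF fam_curves[rule_format, of 0]] k1eq
    by (simp add: fam_0 fun_eq_iff)
  have pA1: "periodic_fn L (A1 t)" for t
  proof -
    have "periodic_fn L ((Dv ^^ 3) (\<Gamma> t))" "periodic_fn L ((Dv ^^ 2) (\<Gamma> t))"
      by (intro periodic_Dvn_vec fc)+
    then show ?thesis using fc(2)[of t] unfolding A1_def pds2_F3 pds2_F2 Dv3 Dv2 periodic_fn_def by simp
  qed
  have pA2: "periodic_fn L (A2 t)" for t
  proof -
    have "periodic_fn L ((Dv ^^ 3) (\<Gamma> t))" "periodic_fn L ((Dv ^^ 2) (\<Gamma> t))" "periodic_fn L ((Dv ^^ 1) (\<Gamma> t))"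
      by (intro periodic_Dvn_vec fc)+
    moreover have "periodic_fn L (Dv (A1 t))"
      by (rule periodic_Dv[OF pA1]) (simp add: smooth2_slice[OF sA1])
    ultimately show ?thesis unfolding A2_def pds2_F3 pds2_F2 pds2_F1 Dv3 Dv2 periodic_fn_def Dx_Dv by simp
  qed
  define J1 where "J1 = (\<lambda>j. pds2 (replicate j False) A1)"
  define J2 where "J2 = (\<lambda>j. pds2 (replicate j False) A2)"
  have jet1: "jet (A1 t) x = (\<lambda>j. J1 j t x)" for t x by (simp add: jet_def J1_def pds2_Dv)
  have jet2: "jet (A2 t) x = (\<lambda>j. J2 j t x)" for t x by (simp add: jet_def J2_def pds2_Dv)
  have sJ: "smooth2 (J1 j)" "smooth2 (J2 j)" for j
    unfolding J1_def J2_def by (intro smooth2_pds2 sA1 sA2)+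
  define fx where "fx = (\<lambda>t x. \<Sum>j<N. pd1 j h (jet (A1 t) x) (jet (A2 t) x) * Dt (J1 j) t x
                                  + pd2 j h (jet (A1 t) x) (jet (A2 t) x) * Dt (J2 j) t x)"
  have der: "((\<lambda>t. h (jet (A1 t) x) (jet (A2 t) x)) has_real_derivative fx t x) (at t)" for t x
    unfolding fx_def
  proof (rule CR[OF loc_h, where U="\<lambda>t. jet (A1 t) x" and V="\<lambda>t. jet (A2 t) x"])
    show "((\<lambda>t. jet (A1 t) x j) has_real_derivative Dt (J1 j) t x) (at t)" for j
      unfolding jet1 by (rule Dt_real, rule smooth2_Q, rule sJ)
    show "((\<lambda>t. jet (A2 t) x j) has_real_derivative Dt (J2 j) t x) (at t)" for j
      unfolding jet2 by (rule Dt_real, rule smooth2_Q, rule sJ)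
  qed
  have cpd1: "continuous_on UNIV (\<lambda>q. pd1 j h (fst q) (snd q))" for j
  proof -
    have "continuous_on UNIV (\<lambda>q. pds [] (pd1 j h) (fst q) (snd q))"
      using local_fn_pd1[OF loc_h, of j] unfolding local_fn_def by blast
    then show ?thesis by simp
  qed
  have cpd2: "continuous_on UNIV (\<lambda>q. pd2 j h (fst q) (snd q))" for j
  proof -
    have "continuous_on UNIV (\<lambda>q. pds [] (pd2 j h) (fst q) (snd q))"
      using local_fn_pd2[OF loc_h, of j] unfolding local_fn_def by blast
    then show ?thesis by simp
  qed
  have cjet: "continuous_on UNIV (\<lambda>p::real\<times>real. (jet (A1 (fst p)) (snd p), jet (A2 (fst p)) (snd p)))"
    unfolding jet1 jet2
    by (intro continuous_on_Pair continuous_on_coordinatewise_then_product Q2_cont smooth2_Q sJ)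
  have cq: "continuous_on UNIV (\<lambda>p. G (fst p) (snd p))" if "smooth2 G" for G :: "real \<Rightarrow> real \<Rightarrow> real"
    using that by (intro Q2_cont smooth2_Q)
  have contfx: "continuous_on UNIV (\<lambda>p. fx (fst p) (snd p))"
    unfolding fx_def
    apply (intro continuous_on_sum continuous_on_add continuous_on_mult)
    subgoal for j using continuous_on_compose2[OF cpd1[of j] cjet] by simp
    subgoal for j by (intro cq smooth2_Dt sJ)
    subgoal for j using continuous_on_compose2[OF cpd2[of j] cjet] by simp
    subgoal for j by (intro cq smooth2_Dt sJ)
    done
  have intg: "(\<lambda>x. h (jet (A1 t) x) (jet (A2 t) x)) integrable_on cbox 0 L" for t
    unfolding cbox_interval
    by (intro smooth_integrable comp_smooth[OF loc_h] smooth2_slice sA1 sA2)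
  have LB: "((\<lambda>t. integral (cbox 0 L) (\<lambda>x. h (jet (A1 t) x) (jet (A2 t) x))) has_field_derivative
             integral (cbox 0 L) (fx 0)) (at 0 within UNIV)"
  proof (rule leibniz_rule_field_derivative)
    show "((\<lambda>t. h (jet (A1 t) x) (jet (A2 t) x)) has_field_derivative fx t x) (at t within UNIV)" for t x
      using der by simp
    show "continuous_on (UNIV \<times> cbox 0 L) (\<lambda>(t, x). fx t x)"
      using continuous_on_subset[OF contfx] by (simp add: split_beta')
  qed (auto intro: intg[unfolded cbox_interval] intg)
  have funeq: "functional L h (K1 t) (K2 t) = integral (cbox 0 L) (\<lambda>x. h (jet (A1 t) x) (jet (A2 t) x))" for t
    by (simp add: functional_def K1eq K2eq cbox_interval)
  have D0: "((\<lambda>t. functional L h (K1 t) (K2 t)) has_real_derivative integral {0..L} (fx 0)) (at 0)"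
    using LB unfolding funeq cbox_interval by simp
  define d1 where "d1 = Dt A1 0"
  define d2 where "d2 = Dt A2 0"
  have sd: "smooth_fn d1" "smooth_fn d2" unfolding d1_def d2_def
    by (intro smooth2_slice smooth2_Dt sA1 sA2)+
  have pd: "periodic_fn L d1" "periodic_fn L d2"
  proof -
    have e1: "(\<lambda>s. A1 s (x + L)) = (\<lambda>s. A1 s x)" for x using pA1 unfolding periodic_fn_def by simp
    have e2: "(\<lambda>s. A2 s (x + L)) = (\<lambda>s. A2 s x)" for x using pA2 unfolding periodic_fn_def by simp
    show "periodic_fn L d1" "periodic_fn L d2"
      unfolding periodic_fn_def d1_def d2_def Dt_def by (simp_all add: e1 e2)
  qed
  have pk: "periodic_fn L k1" "periodic_fn L k2" using pA1[of 0] pA2[of 0] k1eq k2eq by simp_all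
  have fx0: "fx 0 x = (\<Sum>j<N. pd1 j h (jet k1 x) (jet k2 x) * (Dv ^^ j) d1 x + pd2 j h (jet k1 x) (jet k2 x) * (Dv ^^ j) d2 x)" for x
  proof -
    have "Dt (J1 j) 0 x = (Dv ^^ j) d1 x" "Dt (J2 j) 0 x = (Dv ^^ j) d2 x" for j
      unfolding J1_def J2_def d1_def d2_def clairaut_n[OF sA1] clairaut_n[OF sA2] pds2_Dv by simp_all
    then show ?thesis unfolding fx_def k1eq k2eq by simp
  qed
  have Dint: "integral {0..L} (fx 0) = integral {0..L} (\<lambda>x. E1 N h k1 k2 x * d1 x + E2 N h k1 k2 x * d2 x)"
    unfolding fx0 by (rule dH_formula[OF _ loc_h sk(1) pk(1) sk(2) pk(2) sd(1) pd(1) sd(2) pd(2)]) (use L in simp)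
  define r where "r = (\<lambda>x. - Dv a x - 1/3 * (Dv (Dv b) x + 2 * k1 x * b x))"
  define X where "X = Dt \<Gamma> 0"
  have Xeq: "X = (\<lambda>x. r x *\<^sub>R \<gamma> x + a x *\<^sub>R Dv \<gamma> x + b x *\<^sub>R Dv (Dv \<gamma>) x)"
  proof
    fix x
    have "X x = vfield \<gamma> r0 a b x" unfolding X_def a_def b_def
      by (rule Dt_unique) (use fam_vel in blast)
    moreover have "r0 x = r x"
    proof -
      have "Dv a x = - r0 x - 1 / 3 * (Dv (Dv b) x + 2 * k1 x * b x)"
        using ns[unfolded nonstretching_def, rule_format, of x] unfolding a_def b_def Dv2 .
      then show ?thesis unfolding r_def by linarith
    qed
    ultimately show "X x = r x *\<^sub>R \<gamma> x + a x *\<^sub>R Dv \<gamma> x + b x *\<^sub>R Dv (Dv \<gamma>) x"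
      by (simp add: vfield_def Dv2)
  qed
  have QG: "Q2 \<Gamma>" "Q2 (pds2 [False] \<Gamma>)" "Q2 (pds2 [False, False] \<Gamma>)" "Q2 (pds2 [False, False, False] \<Gamma>)"
    by (intro smooth2_Q smooth2_pds2 fam_smooth)+
  have dG: "Dt (pds2 [False, False, False] \<Gamma>) 0 x = Dv (Dv (Dv X)) x"
           "Dt (pds2 [False, False] \<Gamma>) 0 x = Dv (Dv X) x"
           "Dt (pds2 [False] \<Gamma>) 0 x = Dv X x" for x
    using clairaut_vec_n[OF fam_smooth, of 3 0 x] clairaut_vec_n[OF fam_smooth, of 2 0 x]
      clairaut_vec_n[OF fam_smooth, of 1 0 x]
    unfolding rep3 rep2 rep1 pds2_F3 pds2_F2 pds2_F1 X_def by simp_all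
  have G0: "pds2 [False, False, False] \<Gamma> 0 = Dv (Dv (Dv \<gamma>))" "pds2 [False, False] \<Gamma> 0 = Dv (Dv \<gamma>)"
       "pds2 [False] \<Gamma> 0 = Dv \<gamma>"
    unfolding pds2_F3 pds2_F2 pds2_F1 fam_0 by simp_all
  have d1eq: "d1 = Pop1 k1 k2 a b"
  proof
    fix x
    have "d1 x = det3 (X x) (Dv (Dv (Dv \<gamma>)) x) (Dv (Dv \<gamma>) x) + det3 (\<gamma> x) (Dv (Dv (Dv X)) x) (Dv (Dv \<gamma>) x)
       + det3 (\<gamma> x) (Dv (Dv (Dv \<gamma>)) x) (Dv (Dv X) x)"
      unfolding d1_def A1_def Dt_det3[OF QG(1) QG(4) QG(3)] dG G0 X_def fam_0 ..
    also have "\<dots> = Pop1 k1 k2 a b x"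
      by (rule V1[OF sg sk sab curve_det1[OF curve] curve_e3[OF curve] r_def Xeq])
    finally show "d1 x = Pop1 k1 k2 a b x" .
  qed
  have d2eq: "d2 = Pop2 k1 k2 a b"
  proof
    fix x
    have QA: "Q2 (Dx A1)" by (intro smooth2_Q smooth2_Dx sA1)
    have "((\<lambda>s. A2 s x) has_real_derivative
        (det3 (Dt (pds2 [False, False, False] \<Gamma>) 0 x) (pds2 [False] \<Gamma> 0 x) (pds2 [False, False] \<Gamma> 0 x)
         + det3 (pds2 [False, False, False] \<Gamma> 0 x) (Dt (pds2 [False] \<Gamma>) 0 x) (pds2 [False, False] \<Gamma> 0 x)
         + det3 (pds2 [False, False, False] \<Gamma> 0 x) (pds2 [False] \<Gamma> 0 x) (Dt (pds2 [False, False] \<Gamma>) 0 x))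
        - Dt (Dx A1) 0 x) (at 0)"
      unfolding A2_def
      by (intro DERIV_diff det3_DERIV Dt_vec QG Dt_real QA)
    then have "d2 x = (det3 (Dv (Dv (Dv X)) x) (Dv \<gamma> x) (Dv (Dv \<gamma>) x) + det3 (Dv (Dv (Dv \<gamma>)) x) (Dv X x) (Dv (Dv \<gamma>) x)
       + det3 (Dv (Dv (Dv \<gamma>)) x) (Dv \<gamma> x) (Dv (Dv X) x)) - Dt (Dx A1) 0 x"
      unfolding d2_def dG G0 by (rule Dt_unique_real)
    also have "Dt (Dx A1) 0 x = Dv (Pop1 k1 k2 a b) x"
      using clairaut[OF sA1, of 0 x] d1eq unfolding d1_def Dx_Dv by simp
    also have "(det3 (Dv (Dv (Dv X)) x) (Dv \<gamma> x) (Dv (Dv \<gamma>) x) + det3 (Dv (Dv (Dv \<gamma>)) x) (Dv X x) (Dv (Dv \<gamma>) x)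
       + det3 (Dv (Dv (Dv \<gamma>)) x) (Dv \<gamma> x) (Dv (Dv X) x)) - Dv (Pop1 k1 k2 a b) x = Pop2 k1 k2 a b x"
      by (rule V2[OF sg sk sab curve_det1[OF curve] curve_e3[OF curve] r_def Xeq])
    finally show "d2 x = Pop2 k1 k2 a b x" .
  qed
  have "pbracket L N h g k1 k2 = integral {0..L} (\<lambda>x. E1 N h k1 k2 x * d1 x + E2 N h k1 k2 x * d2 x)"
    unfolding pbracket_def d1eq d2eq a_def b_def ..
  then show ?thesis using D0 Dint by simp
qed

end
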